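(* Let $R$ be a ring and $\mathcal C_R$ its set of regular elements. The following are equivalent: (1) $Q(R)$ is semi-simple; (2) the rings $Q_{l,cl}(R)$ and $Q_{r,cl}(R)$ exist and are semi-simple; (3) the rings $Q_l(R)$ and $Q_r(R)$ are semi-simple. If one of these holds then $S_0(R)=\mathcal C_R$ and $Q(R)\cong Q_{l,cl}(R)\cong Q_{r,cl}(R)\cong Q_l(R)\cong Q_r(R)$.
   Context: Rings are associative with $1$. A multiplicatively closed subset $S$ ($1\in S$, $0\notin S$) is a left Ore set if $Sr\cap Rs\ne\emptyset$ for all $r\in R$, $s\in S$, and a left denominator set if moreover $rs=0$ ($s\in S$) implies $tr=0$ for some $t\in S$; right Ore and right denominator sets are defined symmetrically. $Q_l(R):=S_{l,0}(R)^{-1}R$ where $S_{l,0}(R)$ is the largest left denominator set contained in $\mathcal C_R$; $Q_r(R):=RS_{r,0}(R)^{-1}$ with $S_{r,0}(R)$ the largest right denominator set contained in $\mathcal C_R$; $Q(R):=S_0(R)^{-1}R$ where $S_0(R)$ is the largest subset of $\mathcal C_R$ that is both a left and a right denominator set. $Q_{l,cl}(R):=\mathcal C_R^{-1}R$ (exists iff $\mathcal C_R$ is left Ore) and $Q_{r,cl}(R):=R\mathcal C_R^{-1}$ (exists iff $\mathcal C_R$ is right Ore). *)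

theory Defs
  imports "HOL-Algebra.Algebra"
begin

definition regular_elems :: "'a ring \<Rightarrow> 'a set" where
  "regular_elems R = {c \<in> carrier R. \<forall>r \<in> carrier R.
      (c \<otimes>\<^bsub>R\<^esub> r = \<zero>\<^bsub>R\<^esub> \<longrightarrow> r = \<zero>\<^bsub>R\<^esub>) \<and> (r \<otimes>\<^bsub>R\<^esub> c = \<zero>\<^bsub>R\<^esub> \<longrightarrow> r = \<zero>\<^bsub>R\<^esub>)}"

definition mult_closed_set :: "'a ring \<Rightarrow> 'a set \<Rightarrow> bool" where
  "mult_closed_set R S \<longleftrightarrow> S \<subseteq> carrier R \<and> \<one>\<^bsub>R\<^esub> \<in> S \<and> \<zero>\<^bsub>R\<^esub> \<notin> S \<and>
      (\<forall>s \<in> S. \<forall>t \<in> S. s \<otimes>\<^bsub>R\<^esub> t \<in> S)"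

definition left_ore_set :: "'a ring \<Rightarrow> 'a set \<Rightarrow> bool" where
  "left_ore_set R S \<longleftrightarrow> mult_closed_set R S \<and>
      (\<forall>r \<in> carrier R. \<forall>s \<in> S. \<exists>t \<in> S. \<exists>a \<in> carrier R. t \<otimes>\<^bsub>R\<^esub> r = a \<otimes>\<^bsub>R\<^esub> s)"

definition right_ore_set :: "'a ring \<Rightarrow> 'a set \<Rightarrow> bool" where
  "right_ore_set R S \<longleftrightarrow> mult_closed_set R S \<and>
      (\<forall>r \<in> carrier R. \<forall>s \<in> S. \<exists>t \<in> S. \<exists>a \<in> carrier R. r \<otimes>\<^bsub>R\<^esub> t = s \<otimes>\<^bsub>R\<^esub> a)"

definition left_den_set :: "'a ring \<Rightarrow> 'a set \<Rightarrow> bool" where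
  "left_den_set R S \<longleftrightarrow> left_ore_set R S \<and>
      (\<forall>r \<in> carrier R. \<forall>s \<in> S. r \<otimes>\<^bsub>R\<^esub> s = \<zero>\<^bsub>R\<^esub> \<longrightarrow> (\<exists>t \<in> S. t \<otimes>\<^bsub>R\<^esub> r = \<zero>\<^bsub>R\<^esub>))"

definition right_den_set :: "'a ring \<Rightarrow> 'a set \<Rightarrow> bool" where
  "right_den_set R S \<longleftrightarrow> right_ore_set R S \<and>
      (\<forall>r \<in> carrier R. \<forall>s \<in> S. s \<otimes>\<^bsub>R\<^esub> r = \<zero>\<^bsub>R\<^esub> \<longrightarrow> (\<exists>t \<in> S. r \<otimes>\<^bsub>R\<^esub> t = \<zero>\<^bsub>R\<^esub>))"

definition S_l0 :: "'a ring \<Rightarrow> 'a set" where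
  "S_l0 R = (THE S. left_den_set R S \<and> S \<subseteq> regular_elems R \<and>
      (\<forall>T. left_den_set R T \<and> T \<subseteq> regular_elems R \<longrightarrow> T \<subseteq> S))"

definition S_r0 :: "'a ring \<Rightarrow> 'a set" where
  "S_r0 R = (THE S. right_den_set R S \<and> S \<subseteq> regular_elems R \<and>
      (\<forall>T. right_den_set R T \<and> T \<subseteq> regular_elems R \<longrightarrow> T \<subseteq> S))"

definition S_0 :: "'a ring \<Rightarrow> 'a set" where
  "S_0 R = (THE S. left_den_set R S \<and> right_den_set R S \<and> S \<subseteq> regular_elems R \<and>
      (\<forall>T. left_den_set R T \<and> right_den_set R T \<and> T \<subseteq> regular_elems R \<longrightarrow> T \<subseteq> S))"

definition left_ring_of_fractions :: "'a ring \<Rightarrow> 'a set \<Rightarrow> 'b ring \<Rightarrow> ('a \<Rightarrow> 'b) \<Rightarrow> bool" where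
  "left_ring_of_fractions R S Q \<phi> \<longleftrightarrow> ring Q \<and> \<phi> \<in> ring_hom R Q \<and>
     (\<forall>s \<in> S. \<phi> s \<in> Units Q) \<and>
     (\<forall>q \<in> carrier Q. \<exists>s \<in> S. \<exists>r \<in> carrier R. q = inv\<^bsub>Q\<^esub> (\<phi> s) \<otimes>\<^bsub>Q\<^esub> \<phi> r) \<and>
     (\<forall>r \<in> carrier R. \<phi> r = \<zero>\<^bsub>Q\<^esub> \<longleftrightarrow> (\<exists>s \<in> S. s \<otimes>\<^bsub>R\<^esub> r = \<zero>\<^bsub>R\<^esub>))"

definition right_ring_of_fractions :: "'a ring \<Rightarrow> 'a set \<Rightarrow> 'b ring \<Rightarrow> ('a \<Rightarrow> 'b) \<Rightarrow> bool" where
  "right_ring_of_fractions R S Q \<phi> \<longleftrightarrow> ring Q \<and> \<phi> \<in> ring_hom R Q \<and>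
     (\<forall>s \<in> S. \<phi> s \<in> Units Q) \<and>
     (\<forall>q \<in> carrier Q. \<exists>s \<in> S. \<exists>r \<in> carrier R. q = \<phi> r \<otimes>\<^bsub>Q\<^esub> inv\<^bsub>Q\<^esub> (\<phi> s)) \<and>
     (\<forall>r \<in> carrier R. \<phi> r = \<zero>\<^bsub>Q\<^esub> \<longleftrightarrow> (\<exists>s \<in> S. r \<otimes>\<^bsub>R\<^esub> s = \<zero>\<^bsub>R\<^esub>))"

text \<open>Fraction rings are taken with carrier type ('a * 'a) set: the canonical construction
  (equivalence classes of pairs) lives in this type, so they always exist there when S is a
  denominator set; they are unique up to isomorphism.\<close>

type_synonym 'a frac_ring = "('a \<times> 'a) set ring"

text \<open>Semisimple ring: the left regular module is semisimple, i.e. every left ideal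
  (submodule of R as a left module over itself) is a direct summand.\<close>

definition left_ideal :: "'a ring \<Rightarrow> 'a set \<Rightarrow> bool" where
  "left_ideal R I \<longleftrightarrow> additive_subgroup I R \<and>
     (\<forall>a \<in> carrier R. \<forall>x \<in> I. a \<otimes>\<^bsub>R\<^esub> x \<in> I)"

definition semisimple_ring :: "'a ring \<Rightarrow> bool" where
  "semisimple_ring R \<longleftrightarrow> ring R \<and>
     (\<forall>I. left_ideal R I \<longrightarrow> (\<exists>J. left_ideal R J \<and> I \<inter> J = {\<zero>\<^bsub>R\<^esub>} \<and>
          {x \<oplus>\<^bsub>R\<^esub> y | x y. x \<in> I \<and> y \<in> J} = carrier R))"

end

theory Submission
  imports Defs
begin


inductive_set gen :: "('a,'b) ring_scheme \<Rightarrow> 'a set \<Rightarrow> 'a set" for R U where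
  gen_one: "\<one>\<^bsub>R\<^esub> \<in> gen R U"
| gen_step: "u \<in> U \<Longrightarrow> m \<in> gen R U \<Longrightarrow> u \<otimes>\<^bsub>R\<^esub> m \<in> gen R U"

locale rg = ring R for R :: "'a ring" (structure)

context rg begin

lemma reg_carrier: "c \<in> regular_elems R \<Longrightarrow> c \<in> carrier R"
  by (simp add: regular_elems_def)

lemma reg_left: "c \<in> regular_elems R \<Longrightarrow> r \<in> carrier R \<Longrightarrow> r \<otimes> c = \<zero> \<Longrightarrow> r = \<zero>"
  unfolding regular_elems_def by blast

lemma reg_right: "c \<in> regular_elems R \<Longrightarrow> r \<in> carrier R \<Longrightarrow> c \<otimes> r = \<zero> \<Longrightarrow> r = \<zero>"
  unfolding regular_elems_def by blast

lemma reg_one: "\<one> \<in> regular_elems R"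
  by (simp add: regular_elems_def)

lemma reg_mult:
  assumes c: "c \<in> regular_elems R" and d: "d \<in> regular_elems R"
  shows "c \<otimes> d \<in> regular_elems R"
proof -
  have cc: "c \<in> carrier R" "d \<in> carrier R" using c d reg_carrier by blast+
  { fix r assume r: "r \<in> carrier R"
    have "r = \<zero>" if h: "c \<otimes> d \<otimes> r = \<zero>"
    proof -
      have "c \<otimes> (d \<otimes> r) = \<zero>" using h r cc by (simp add: m_assoc)
      then have "d \<otimes> r = \<zero>" using reg_right[OF c] r cc by blast
      then show ?thesis using reg_right[OF d] r by blast
    qed
    moreover have "r = \<zero>" if h: "r \<otimes> (c \<otimes> d) = \<zero>"
    proof -
      have "(r \<otimes> c) \<otimes> d = \<zero>" using h r cc by (simp add: m_assoc)
      then have "r \<otimes> c = \<zero>" using reg_left[OF d] r cc by blast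
      then show ?thesis using reg_left[OF c] r by blast
    qed
    ultimately have "(c \<otimes> d \<otimes> r = \<zero> \<longrightarrow> r = \<zero>) \<and> (r \<otimes> (c \<otimes> d) = \<zero> \<longrightarrow> r = \<zero>)" by blast }
  then show ?thesis using cc unfolding regular_elems_def by blast
qed

lemma reg_zero: "\<one> \<noteq> \<zero> \<Longrightarrow> \<zero> \<notin> regular_elems R"
  using reg_left[of \<zero> \<one>] by auto

lemma gen_sub: assumes U: "U \<subseteq> regular_elems R" shows "gen R U \<subseteq> regular_elems R"
proof
  fix x assume "x \<in> gen R U"
  then show "x \<in> regular_elems R"
    proof (induction rule: gen.induct)
    case gen_one show ?case by (rule reg_one)
  next
    case (gen_step u m) then show ?case using U reg_mult by blast
  qed
qed

lemma gen_incl: assumes "U \<subseteq> carrier R" shows "U \<subseteq> gen R U"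
proof
  fix u assume u: "u \<in> U"
  have "u \<otimes> \<one> \<in> gen R U" by (rule gen_step[OF u gen_one])
  then show "u \<in> gen R U" using u assms by auto
qed

lemma gen_mult: assumes "U \<subseteq> carrier R" "x \<in> gen R U" "y \<in> gen R U"
  shows "x \<otimes> y \<in> gen R U"
  using assms(2,3)
proof (induction rule: gen.induct)
  case gen_one
  have "y \<in> regular_elems R \<or> True" by simp
  have "gen R U \<subseteq> carrier R"
  proof
    fix z assume "z \<in> gen R U" then show "z \<in> carrier R"
      by (induction rule: gen.induct) (use assms(1) in auto)
  qed
  then show ?case using gen_one by auto
next
  case (gen_step u m)
  have gc: "gen R U \<subseteq> carrier R"
  proof
    fix z assume "z \<in> gen R U" then show "z \<in> carrier R"
      by (induction rule: gen.induct) (use assms(1) in auto)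
  qed
  have "u \<otimes> m \<otimes> y = u \<otimes> (m \<otimes> y)"
    using gen_step gc assms(1) by (auto intro: m_assoc)
  then show ?case using gen_step by (auto intro: gen.gen_step)
qed

lemma gen_carrier: assumes U: "U \<subseteq> carrier R" shows "gen R U \<subseteq> carrier R"
proof
  fix z assume "z \<in> gen R U" then show "z \<in> carrier R"
    by (induction rule: gen.induct) (use U in auto)
qed

lemma gen_left_ore:
  assumes U: "U \<subseteq> carrier R"
    and LO: "\<And>u r. u \<in> U \<Longrightarrow> r \<in> carrier R \<Longrightarrow> \<exists>t \<in> gen R U. \<exists>a \<in> carrier R. t \<otimes> r = a \<otimes> u"
    and m: "m \<in> gen R U"
  shows "\<forall>r \<in> carrier R. \<exists>t \<in> gen R U. \<exists>a \<in> carrier R. t \<otimes> r = a \<otimes> m"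
  using m
proof (induction rule: gen.induct)
  case gen_one
  show ?case
  proof
    fix r assume r: "r \<in> carrier R"
    show "\<exists>t\<in>gen R U. \<exists>a\<in>carrier R. t \<otimes> r = a \<otimes> \<one>"
      by (intro bexI[of _ \<one>] bexI[of _ r]) (use r gen.gen_one in auto)
  qed
next
  case (gen_step u m)
  have gc: "gen R U \<subseteq> carrier R" using gen_carrier[OF U] .
  show ?case
  proof
    fix r assume r: "r \<in> carrier R"
    obtain t1 a1 where t1: "t1 \<in> gen R U" "a1 \<in> carrier R" "t1 \<otimes> r = a1 \<otimes> m"
      using gen_step.IH r by blast
    obtain t2 a2 where t2: "t2 \<in> gen R U" "a2 \<in> carrier R" "t2 \<otimes> a1 = a2 \<otimes> u"
      using LO[OF gen_step.hyps(1) t1(2)] by blast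
    have c: "t1 \<in> carrier R" "t2 \<in> carrier R" "u \<in> carrier R" "m \<in> carrier R"
      using gc t1 t2 U gen_step by auto
    have "t2 \<otimes> t1 \<otimes> r = t2 \<otimes> (a1 \<otimes> m)" using c r t1(3) by (simp add: m_assoc)
    also have "\<dots> = (t2 \<otimes> a1) \<otimes> m" using c r t1(2) t2(2) by (simp add: m_assoc)
    also have "\<dots> = (a2 \<otimes> u) \<otimes> m" using t2(3) by simp
    also have "\<dots> = a2 \<otimes> (u \<otimes> m)" using c r t1(2) t2(2) by (simp add: m_assoc)
    finally have "t2 \<otimes> t1 \<otimes> r = a2 \<otimes> (u \<otimes> m)" .
    moreover have "t2 \<otimes> t1 \<in> gen R U" using gen_mult[OF U t2(1) t1(1)] .
    ultimately show "\<exists>t \<in> gen R U. \<exists>a \<in> carrier R. t \<otimes> r = a \<otimes> (u \<otimes> m)"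
      using t2(2) by blast
  qed
qed

lemma gen_right_ore:
  assumes U: "U \<subseteq> carrier R"
    and RO: "\<And>u r. u \<in> U \<Longrightarrow> r \<in> carrier R \<Longrightarrow> \<exists>t \<in> gen R U. \<exists>a \<in> carrier R. r \<otimes> t = u \<otimes> a"
    and m: "m \<in> gen R U"
  shows "\<forall>r \<in> carrier R. \<exists>t \<in> gen R U. \<exists>a \<in> carrier R. r \<otimes> t = m \<otimes> a"
  using m
proof (induction rule: gen.induct)
  case gen_one
  show ?case
  proof
    fix r assume r: "r \<in> carrier R"
    show "\<exists>t\<in>gen R U. \<exists>a\<in>carrier R. r \<otimes> t = \<one> \<otimes> a"
      by (intro bexI[of _ \<one>] bexI[of _ r]) (use r gen.gen_one in auto)
  qed
next
  case (gen_step u m)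
  have gc: "gen R U \<subseteq> carrier R" using gen_carrier[OF U] .
  show ?case
  proof
    fix r assume r: "r \<in> carrier R"
    obtain t1 a1 where t1: "t1 \<in> gen R U" "a1 \<in> carrier R" "r \<otimes> t1 = u \<otimes> a1"
      using RO[OF gen_step.hyps(1) r] by blast
    obtain t2 a2 where t2: "t2 \<in> gen R U" "a2 \<in> carrier R" "a1 \<otimes> t2 = m \<otimes> a2"
      using gen_step.IH t1(2) by blast
    have c: "t1 \<in> carrier R" "t2 \<in> carrier R" "u \<in> carrier R" "m \<in> carrier R"
      using gc t1 t2 U gen_step by auto
    have "r \<otimes> (t1 \<otimes> t2) = (u \<otimes> a1) \<otimes> t2" using c r t1 t2 by (simp add: m_assoc[symmetric])
    also have "\<dots> = u \<otimes> (a1 \<otimes> t2)" using c r t1(2) t2(2) by (simp add: m_assoc)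
    also have "\<dots> = u \<otimes> (m \<otimes> a2)" using t2(3) by simp
    also have "\<dots> = u \<otimes> m \<otimes> a2" using c r t1(2) t2(2) by (simp add: m_assoc)
    finally have "r \<otimes> (t1 \<otimes> t2) = u \<otimes> m \<otimes> a2" .
    moreover have "t1 \<otimes> t2 \<in> gen R U" using gen_mult[OF U t1(1) t2(1)] .
    ultimately show "\<exists>t \<in> gen R U. \<exists>a \<in> carrier R. r \<otimes> t = u \<otimes> m \<otimes> a"
      using t2(2) by blast
  qed
qed


lemma left_den_iff: assumes "S \<subseteq> regular_elems R" shows "left_den_set R S \<longleftrightarrow> left_ore_set R S"
proof
  assume "left_ore_set R S"
  then have o: "\<one> \<in> S" unfolding left_ore_set_def mult_closed_set_def by blast
  have "\<forall>r \<in> carrier R. \<forall>s \<in> S. r \<otimes> s = \<zero> \<longrightarrow> (\<exists>t \<in> S. t \<otimes> r = \<zero>)"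
  proof (intro ballI impI)
    fix r s assume "r \<in> carrier R" "s \<in> S" "r \<otimes> s = \<zero>"
    then have "r = \<zero>" using reg_left assms by blast
    then show "\<exists>t \<in> S. t \<otimes> r = \<zero>" using o by (intro bexI[of _ \<one>]) auto
  qed
  then show "left_den_set R S" using \<open>left_ore_set R S\<close> unfolding left_den_set_def by blast
qed (simp add: left_den_set_def)

lemma right_den_iff: assumes "S \<subseteq> regular_elems R" shows "right_den_set R S \<longleftrightarrow> right_ore_set R S"
proof
  assume "right_ore_set R S"
  then have o: "\<one> \<in> S" unfolding right_ore_set_def mult_closed_set_def by blast
  have "\<forall>r \<in> carrier R. \<forall>s \<in> S. s \<otimes> r = \<zero> \<longrightarrow> (\<exists>t \<in> S. r \<otimes> t = \<zero>)"
  proof (intro ballI impI)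
    fix r s assume "r \<in> carrier R" "s \<in> S" "s \<otimes> r = \<zero>"
    then have "r = \<zero>" using reg_right assms by blast
    then show "\<exists>t \<in> S. r \<otimes> t = \<zero>" using o by (intro bexI[of _ \<one>]) auto
  qed
  then show "right_den_set R S" using \<open>right_ore_set R S\<close> unfolding right_den_set_def by blast
qed (simp add: right_den_set_def)

lemma reg_sub_carrier: "regular_elems R \<subseteq> carrier R"
  using reg_carrier by blast

lemma gen_mc: assumes nz: "\<one> \<noteq> \<zero>" and U: "U \<subseteq> regular_elems R"
  shows "mult_closed_set R (gen R U)"
  unfolding mult_closed_set_def
  using gen_sub[OF U] reg_sub_carrier reg_zero[OF nz] gen_one[of R U] gen_mult[of U] U
  by blast

lemma S_l0_props:
  assumes nz: "\<one> \<noteq> \<zero>"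
  shows "left_den_set R (S_l0 R) \<and> S_l0 R \<subseteq> regular_elems R \<and>
      (\<forall>T. left_den_set R T \<and> T \<subseteq> regular_elems R \<longrightarrow> T \<subseteq> S_l0 R)"
proof -
  define U where "U = \<Union>{T. left_den_set R T \<and> T \<subseteq> regular_elems R}"
  have UC: "U \<subseteq> regular_elems R" unfolding U_def by blast
  have Uc: "U \<subseteq> carrier R" using UC reg_sub_carrier by blast
  have LO: "\<exists>t \<in> gen R U. \<exists>a \<in> carrier R. t \<otimes> r = a \<otimes> u" if hu: "u \<in> U" and hr: "r \<in> carrier R" for u r
  proof -
    obtain T where T: "left_den_set R T" "T \<subseteq> regular_elems R" "u \<in> T" using hu unfolding U_def by blast
    then obtain t a where "t \<in> T" "a \<in> carrier R" "t \<otimes> r = a \<otimes> u"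
      using hr unfolding left_den_set_def left_ore_set_def by blast
    moreover have "t \<in> gen R U" using \<open>t \<in> T\<close> T gen_incl[OF Uc] unfolding U_def by blast
    ultimately show ?thesis by blast
  qed
  have "left_ore_set R (gen R U)"
    unfolding left_ore_set_def using gen_mc[OF nz UC] gen_left_ore[OF Uc LO] by blast
  then have "left_den_set R (gen R U)" using left_den_iff gen_sub[OF UC] by blast
  then have "gen R U \<subseteq> U" using gen_sub[OF UC] unfolding U_def by blast
  then have GU: "gen R U = U" using gen_incl[OF Uc] by blast
  have P: "left_den_set R U \<and> U \<subseteq> regular_elems R \<and>
      (\<forall>T. left_den_set R T \<and> T \<subseteq> regular_elems R \<longrightarrow> T \<subseteq> U)"
    using \<open>left_den_set R (gen R U)\<close> GU UC unfolding U_def by auto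
  have "S_l0 R = U" unfolding S_l0_def
    by (rule the_equality) (use P in blast)+
  then show ?thesis using P by simp
qed

lemma S_r0_props:
  assumes nz: "\<one> \<noteq> \<zero>"
  shows "right_den_set R (S_r0 R) \<and> S_r0 R \<subseteq> regular_elems R \<and>
      (\<forall>T. right_den_set R T \<and> T \<subseteq> regular_elems R \<longrightarrow> T \<subseteq> S_r0 R)"
proof -
  define U where "U = \<Union>{T. right_den_set R T \<and> T \<subseteq> regular_elems R}"
  have UC: "U \<subseteq> regular_elems R" unfolding U_def by blast
  have Uc: "U \<subseteq> carrier R" using UC reg_sub_carrier by blast
  have RO: "\<exists>t \<in> gen R U. \<exists>a \<in> carrier R. r \<otimes> t = u \<otimes> a" if hu: "u \<in> U" and hr: "r \<in> carrier R" for u r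
  proof -
    obtain T where T: "right_den_set R T" "T \<subseteq> regular_elems R" "u \<in> T" using hu unfolding U_def by blast
    then obtain t a where "t \<in> T" "a \<in> carrier R" "r \<otimes> t = u \<otimes> a"
      using hr unfolding right_den_set_def right_ore_set_def by blast
    moreover have "t \<in> gen R U" using \<open>t \<in> T\<close> T gen_incl[OF Uc] unfolding U_def by blast
    ultimately show ?thesis by blast
  qed
  have "right_ore_set R (gen R U)"
    unfolding right_ore_set_def using gen_mc[OF nz UC] gen_right_ore[OF Uc RO] by blast
  then have "right_den_set R (gen R U)" using right_den_iff gen_sub[OF UC] by blast
  then have "gen R U \<subseteq> U" using gen_sub[OF UC] unfolding U_def by blast
  then have GU: "gen R U = U" using gen_incl[OF Uc] by blast
  have P: "right_den_set R U \<and> U \<subseteq> regular_elems R \<and>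
      (\<forall>T. right_den_set R T \<and> T \<subseteq> regular_elems R \<longrightarrow> T \<subseteq> U)"
    using \<open>right_den_set R (gen R U)\<close> GU UC unfolding U_def by auto
  have "S_r0 R = U" unfolding S_r0_def
    by (rule the_equality) (use P in blast)+
  then show ?thesis using P by simp
qed

lemma S_0_props:
  assumes nz: "\<one> \<noteq> \<zero>"
  shows "left_den_set R (S_0 R) \<and> right_den_set R (S_0 R) \<and> S_0 R \<subseteq> regular_elems R \<and>
      (\<forall>T. left_den_set R T \<and> right_den_set R T \<and> T \<subseteq> regular_elems R \<longrightarrow> T \<subseteq> S_0 R)"
proof -
  define U where "U = \<Union>{T. left_den_set R T \<and> right_den_set R T \<and> T \<subseteq> regular_elems R}"
  have UC: "U \<subseteq> regular_elems R" unfolding U_def by blast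
  have Uc: "U \<subseteq> carrier R" using UC reg_sub_carrier by blast
  have LO: "\<exists>t \<in> gen R U. \<exists>a \<in> carrier R. t \<otimes> r = a \<otimes> u" if hu: "u \<in> U" and hr: "r \<in> carrier R" for u r
  proof -
    obtain T where T: "left_den_set R T" "right_den_set R T" "T \<subseteq> regular_elems R" "u \<in> T" using hu unfolding U_def by blast
    then obtain t a where "t \<in> T" "a \<in> carrier R" "t \<otimes> r = a \<otimes> u"
      using hr unfolding left_den_set_def left_ore_set_def by blast
    moreover have "t \<in> gen R U" using \<open>t \<in> T\<close> T gen_incl[OF Uc] unfolding U_def by blast
    ultimately show ?thesis by blast
  qed
  have RO: "\<exists>t \<in> gen R U. \<exists>a \<in> carrier R. r \<otimes> t = u \<otimes> a" if hu: "u \<in> U" and hr: "r \<in> carrier R" for u r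
  proof -
    obtain T where T: "left_den_set R T" "right_den_set R T" "T \<subseteq> regular_elems R" "u \<in> T" using hu unfolding U_def by blast
    then obtain t a where "t \<in> T" "a \<in> carrier R" "r \<otimes> t = u \<otimes> a"
      using hr unfolding right_den_set_def right_ore_set_def by blast
    moreover have "t \<in> gen R U" using \<open>t \<in> T\<close> T gen_incl[OF Uc] unfolding U_def by blast
    ultimately show ?thesis by blast
  qed
  have "left_ore_set R (gen R U)"
    unfolding left_ore_set_def using gen_mc[OF nz UC] gen_left_ore[OF Uc LO] by blast
  then have L: "left_den_set R (gen R U)" using left_den_iff gen_sub[OF UC] by blast
  have "right_ore_set R (gen R U)"
    unfolding right_ore_set_def using gen_mc[OF nz UC] gen_right_ore[OF Uc RO] by blast
  then have Rr: "right_den_set R (gen R U)" using right_den_iff gen_sub[OF UC] by blast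
  have "gen R U \<subseteq> U" using gen_sub[OF UC] L Rr unfolding U_def by blast
  then have GU: "gen R U = U" using gen_incl[OF Uc] by blast
  have P: "left_den_set R U \<and> right_den_set R U \<and> U \<subseteq> regular_elems R \<and>
      (\<forall>T. left_den_set R T \<and> right_den_set R T \<and> T \<subseteq> regular_elems R \<longrightarrow> T \<subseteq> U)"
    using L Rr GU UC unfolding U_def by auto
  have "S_0 R = U" unfolding S_0_def
    by (rule the_equality) (use P in blast)+
  then show ?thesis using P by simp
qed

end



context rg begin

lemma left_idealI:
  assumes "I \<subseteq> carrier R" "\<zero> \<in> I" "\<And>x y. x \<in> I \<Longrightarrow> y \<in> I \<Longrightarrow> x \<oplus> y \<in> I"
    "\<And>x. x \<in> I \<Longrightarrow> \<ominus> x \<in> I" "\<And>a x. a \<in> carrier R \<Longrightarrow> x \<in> I \<Longrightarrow> a \<otimes> x \<in> I"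
  shows "left_ideal R I"
  unfolding left_ideal_def
proof (intro conjI additive_subgroupI)
  show "subgroup I (add_monoid R)"
    by (rule group.subgroupI[OF a_group]) (use assms in \<open>auto simp: a_inv_def\<close>)
  show "\<forall>a\<in>carrier R. \<forall>x\<in>I. a \<otimes> x \<in> I" using assms by blast
qed

lemma left_ideal_props:
  assumes "left_ideal R I"
  shows "I \<subseteq> carrier R" "\<zero> \<in> I" "\<And>x y. x \<in> I \<Longrightarrow> y \<in> I \<Longrightarrow> x \<oplus> y \<in> I"
    "\<And>x. x \<in> I \<Longrightarrow> \<ominus> x \<in> I" "\<And>a x. a \<in> carrier R \<Longrightarrow> x \<in> I \<Longrightarrow> a \<otimes> x \<in> I"
proof -
  have A: "additive_subgroup I R" and M: "\<forall>a \<in> carrier R. \<forall>x \<in> I. a \<otimes> x \<in> I"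
    using assms unfolding left_ideal_def by auto
  show "I \<subseteq> carrier R" by (rule additive_subgroup.a_subset[OF A])
  show "\<zero> \<in> I" by (rule additive_subgroup.zero_closed[OF A])
  show "\<And>x y. x \<in> I \<Longrightarrow> y \<in> I \<Longrightarrow> x \<oplus> y \<in> I" by (rule additive_subgroup.a_closed[OF A])
  show "\<And>x. x \<in> I \<Longrightarrow> \<ominus> x \<in> I" by (rule additive_subgroup.a_inv_closed[OF A])
  show "\<And>a x. a \<in> carrier R \<Longrightarrow> x \<in> I \<Longrightarrow> a \<otimes> x \<in> I" using M by blast
qed

lemma ss_complement:
  assumes "semisimple_ring R" "left_ideal R I"
  obtains J x y where "left_ideal R J" "I \<inter> J = {\<zero>}" "x \<in> I" "y \<in> J" "\<one> = x \<oplus> y"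
proof -
  obtain J where J: "left_ideal R J" "I \<inter> J = {\<zero>}" "{x \<oplus> y | x y. x \<in> I \<and> y \<in> J} = carrier R"
    using assms unfolding semisimple_ring_def by blast
  then have "\<one> \<in> {x \<oplus> y | x y. x \<in> I \<and> y \<in> J}" by simp
  then obtain x y where "x \<in> I" "y \<in> J" "\<one> = x \<oplus> y" by blast
  then show ?thesis using that J by blast
qed

lemma pow_cancel: assumes "a \<in> carrier R" "b \<in> carrier R" "a \<otimes> b = \<one>"
  shows "a [^] (n::nat) \<otimes> b [^] n = \<one>"
proof (induction n)
  case 0 then show ?case by simp
next
  case (Suc n)
  have e1: "a [^] Suc n = a [^] n \<otimes> a" by simp
  have e2: "b [^] Suc n = b \<otimes> b [^] n" by (rule nat_pow_Suc2[OF assms(2)])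
  have "a [^] Suc n \<otimes> b [^] Suc n = a [^] n \<otimes> a \<otimes> (b \<otimes> b [^] n)"
    unfolding e2 by (simp only: e1)
  also have "\<dots> = a [^] n \<otimes> (a \<otimes> b) \<otimes> b [^] n"
    using assms(1,2) by (simp add: m_assoc)
  also have "\<dots> = \<one>" using assms Suc by simp
  finally show ?case .
qed

lemma ss_df:
  assumes ss: "semisimple_ring R" and a: "a \<in> carrier R" and b: "b \<in> carrier R" and ab: "a \<otimes> b = \<one>"
  shows "b \<otimes> a = \<one>"
proof -
  define f where "f = \<one> \<ominus> b \<otimes> a"
  have fc: "f \<in> carrier R" using a b f_def by simp
  have fb: "f \<otimes> b = \<zero>"
  proof -
    have "f \<otimes> b = b \<ominus> b \<otimes> (a \<otimes> b)"
      using a b unfolding f_def by (simp add: minus_eq l_distr l_minus m_assoc)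
    then show ?thesis using ab b by (simp add: minus_eq r_neg)
  qed
  define I where "I = {x \<in> carrier R. \<exists>n::nat. x \<otimes> b [^] n = \<zero>}"
  have kill: "x \<otimes> b [^] (n + k) = \<zero>" if "x \<in> carrier R" "x \<otimes> b [^] (n::nat) = \<zero>" for x n k
  proof -
    have "b [^] (n + k) = b [^] n \<otimes> b [^] k" using nat_pow_mult[OF b] by simp
    then have "x \<otimes> b [^] (n + k) = (x \<otimes> b [^] n) \<otimes> b [^] k"
      using that(1) b by (simp add: m_assoc)
    then show ?thesis using that b by simp
  qed
  have LI: "left_ideal R I"
  proof (rule left_idealI)
    show "I \<subseteq> carrier R" unfolding I_def by blast
    show "\<zero> \<in> I" unfolding I_def by (auto intro: exI[of _ 0])
    show "x \<oplus> y \<in> I" if hx: "x \<in> I" and hy: "y \<in> I" for x y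
    proof -
      obtain n m :: nat where n: "x \<in> carrier R" "x \<otimes> b [^] n = \<zero>" and m: "y \<in> carrier R" "y \<otimes> b [^] m = \<zero>"
        using hx hy unfolding I_def by blast
      have "(x \<oplus> y) \<otimes> b [^] (n + m) = x \<otimes> b [^] (n + m) \<oplus> y \<otimes> b [^] (m + n)"
        using n m b by (simp add: l_distr add.commute)
      also have "\<dots> = \<zero>" using kill[OF n] kill[OF m] n m by simp
      finally show ?thesis using n m unfolding I_def by blast
    qed
    show "\<ominus> x \<in> I" if hx: "x \<in> I" for x
    proof -
      obtain n :: nat where n: "x \<in> carrier R" "x \<otimes> b [^] n = \<zero>" using hx unfolding I_def by blast
      have "(\<ominus> x) \<otimes> b [^] n = \<zero>" using n b by (simp add: l_minus)
      then show ?thesis using n unfolding I_def by blast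
    qed
    show "c \<otimes> x \<in> I" if hc: "c \<in> carrier R" and hx: "x \<in> I" for c x
    proof -
      obtain n :: nat where n: "x \<in> carrier R" "x \<otimes> b [^] n = \<zero>" using hx unfolding I_def by blast
      have "(c \<otimes> x) \<otimes> b [^] n = \<zero>" using n b hc by (simp add: m_assoc)
      then show ?thesis using n hc unfolding I_def by blast
    qed
  qed
  obtain J x y where J: "left_ideal R J" "I \<inter> J = {\<zero>}" "x \<in> I" "y \<in> J" "\<one> = x \<oplus> y"
    using ss_complement[OF ss LI] by blast
  note Ip = left_ideal_props[OF LI]
  note Jp = left_ideal_props[OF J(1)]
  obtain n :: nat where xc: "x \<in> carrier R" and xn: "x \<otimes> b [^] n = \<zero>" using J(3) unfolding I_def by blast
  have yc: "y \<in> carrier R" using Jp(1) J(4) by blast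
  define z where "z = f \<otimes> a [^] n"
  have zc: "z \<in> carrier R" using fc a z_def by simp
  have zI: "z \<in> I"
  proof -
    have "z \<otimes> b [^] Suc n = f \<otimes> (a [^] n \<otimes> b [^] n) \<otimes> b"
      using fc a b unfolding z_def by (simp add: m_assoc)
    also have "\<dots> = \<zero>" using pow_cancel[OF a b ab] fc fb by simp
    finally show ?thesis using zc unfolding I_def by blast
  qed
  have zsplit: "z = z \<otimes> x \<oplus> z \<otimes> y"
  proof -
    have "z = z \<otimes> \<one>" using zc by simp
    also have "\<dots> = z \<otimes> (x \<oplus> y)" using J(5) by simp
    also have "\<dots> = z \<otimes> x \<oplus> z \<otimes> y" using zc xc yc by (simp add: r_distr)
    finally show ?thesis .
  qed
  have zx: "z \<otimes> x \<in> I" using Ip(5)[OF zc J(3)] .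
  have zyJ: "z \<otimes> y \<in> J" using Jp(5)[OF zc J(4)] .
  have "z \<otimes> y = \<ominus> (z \<otimes> x) \<oplus> z"
  proof -
    have "\<ominus> (z \<otimes> x) \<oplus> z = \<ominus> (z \<otimes> x) \<oplus> (z \<otimes> x \<oplus> z \<otimes> y)"
      by (fact arg_cong[where f="\<lambda>w. \<ominus> (z \<otimes> x) \<oplus> w", OF zsplit])
    also have "\<dots> = (\<ominus> (z \<otimes> x) \<oplus> z \<otimes> x) \<oplus> z \<otimes> y" using zc xc yc by (simp add: a_assoc)
    also have "\<dots> = z \<otimes> y" using zc xc yc by (simp add: l_neg)
    finally show ?thesis by simp
  qed
  then have "z \<otimes> y \<in> I" using Ip(3)[OF Ip(4)[OF zx] zI] by simp
  then have zy0: "z \<otimes> y = \<zero>" using J(2) zyJ by blast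
  have "z \<otimes> x \<oplus> z \<otimes> y = z \<otimes> x" using zy0 zc xc by simp
  then have zzx: "z = z \<otimes> x" by (rule trans[OF zsplit])
  have "f = f \<otimes> (a [^] n \<otimes> b [^] n)" using pow_cancel[OF a b ab] fc by simp
  also have "\<dots> = z \<otimes> b [^] n" using fc a b unfolding z_def by (simp add: m_assoc)
  also have "\<dots> = (z \<otimes> x) \<otimes> b [^] n" by (fact arg_cong[where f="\<lambda>w. w \<otimes> b [^] n", OF zzx])
  also have "\<dots> = z \<otimes> (x \<otimes> b [^] n)" using zc xc b by (simp add: m_assoc)
  also have "\<dots> = \<zero>" using xn zc by simp
  finally have "\<one> \<ominus> b \<otimes> a = \<zero>" unfolding f_def .
  then have "\<one> = b \<otimes> a" using a b r_right_minus_eq[of \<one> "b \<otimes> a"] by simp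
  then show ?thesis by simp
qed

end



context rg begin

lemma one_split:
  assumes z: "z \<in> carrier R" and x: "x \<in> carrier R" and y: "y \<in> carrier R" and h: "\<one> = x \<oplus> y"
  shows "z \<otimes> y = \<ominus> (z \<otimes> x) \<oplus> z"
proof -
  have e: "z \<otimes> x \<oplus> z \<otimes> y = z"
  proof -
    have "z \<otimes> x \<oplus> z \<otimes> y = z \<otimes> (x \<oplus> y)" using z x y by (simp add: r_distr)
    also have "\<dots> = z" using z by (simp add: h[symmetric])
    finally show ?thesis .
  qed
  have "\<ominus> (z \<otimes> x) \<oplus> (z \<otimes> x \<oplus> z \<otimes> y) = z \<otimes> y"
    using z x y by (simp add: a_assoc[symmetric] l_neg)
  then show ?thesis using e by simp
qed

lemma ss_unit:
  assumes ss: "semisimple_ring R" and c: "c \<in> carrier R"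
    and reg: "(\<forall>x \<in> carrier R. x \<otimes> c = \<zero> \<longrightarrow> x = \<zero>) \<or> (\<forall>x \<in> carrier R. c \<otimes> x = \<zero> \<longrightarrow> x = \<zero>)"
  shows "c \<in> Units R"
proof -
  define K where "K = {q \<otimes> c | q. q \<in> carrier R}"
  have LK: "left_ideal R K"
  proof (rule left_idealI)
    show "K \<subseteq> carrier R" unfolding K_def using c by blast
    have "\<zero> = \<zero> \<otimes> c" using c by simp
    then show "\<zero> \<in> K" unfolding K_def by blast
    show "u \<oplus> v \<in> K" if hu: "u \<in> K" and hv: "v \<in> K" for u v
    proof -
      obtain p q where "p \<in> carrier R" "q \<in> carrier R" "u = p \<otimes> c" "v = q \<otimes> c"
        using hu hv unfolding K_def by blast
      then have "u \<oplus> v = (p \<oplus> q) \<otimes> c" "p \<oplus> q \<in> carrier R" using c by (simp_all add: l_distr)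
      then show ?thesis unfolding K_def by blast
    qed
    show "\<ominus> u \<in> K" if hu: "u \<in> K" for u
    proof -
      obtain p where "p \<in> carrier R" "u = p \<otimes> c" using hu unfolding K_def by blast
      then have "\<ominus> u = (\<ominus> p) \<otimes> c" "\<ominus> p \<in> carrier R" using c by (simp_all add: l_minus)
      then show ?thesis unfolding K_def by blast
    qed
    show "a \<otimes> u \<in> K" if ha: "a \<in> carrier R" and hu: "u \<in> K" for a u
    proof -
      obtain p where "p \<in> carrier R" "u = p \<otimes> c" using hu unfolding K_def by blast
      then have "a \<otimes> u = (a \<otimes> p) \<otimes> c" "a \<otimes> p \<in> carrier R" using c ha by (simp_all add: m_assoc)
      then show ?thesis unfolding K_def by blast
    qed
  qed
  obtain J x y where J: "left_ideal R J" "K \<inter> J = {\<zero>}" "x \<in> K" "y \<in> J" "\<one> = x \<oplus> y"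
    using ss_complement[OF ss LK] by blast
  note Jp = left_ideal_props[OF J(1)]
  obtain d where d: "d \<in> carrier R" "x = d \<otimes> c" using J(3) unfolding K_def by blast
  have xc: "x \<in> carrier R" using d c by simp
  have yc: "y \<in> carrier R" using Jp(1) J(4) by blast
  have cyJ: "c \<otimes> y \<in> J" using Jp(5)[OF c J(4)] .
  have cy: "c \<otimes> y = (\<ominus> (c \<otimes> d) \<oplus> \<one>) \<otimes> c"
  proof -
    have "c \<otimes> y = \<ominus> (c \<otimes> x) \<oplus> c" by (rule one_split[OF c xc yc J(5)])
    also have "\<dots> = \<ominus> (c \<otimes> d \<otimes> c) \<oplus> c" using d c by (simp add: m_assoc)
    also have "\<dots> = (\<ominus> (c \<otimes> d) \<oplus> \<one>) \<otimes> c" using d c by (simp add: l_distr l_minus)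
    finally show ?thesis .
  qed
  have "c \<otimes> y \<in> K" unfolding cy K_def using c d by blast
  then have cy0: "c \<otimes> y = \<zero>" using cyJ J(2) by blast
  show ?thesis
  proof (cases "\<forall>x \<in> carrier R. x \<otimes> c = \<zero> \<longrightarrow> x = \<zero>")
    case True
    have "(\<ominus> (c \<otimes> d) \<oplus> \<one>) \<otimes> c = \<zero>" using cy cy0 by simp
    then have "\<ominus> (c \<otimes> d) \<oplus> \<one> = \<zero>" using True c d by simp
    then have "\<one> \<ominus> c \<otimes> d = \<zero>" using c d by (simp add: minus_eq a_comm)
    then have cd: "c \<otimes> d = \<one>" using r_right_minus_eq[of \<one> "c \<otimes> d"] c d by simp
    then have "d \<otimes> c = \<one>" using ss_df[OF ss c d(1)] by simp
    then show ?thesis using cd c d unfolding Units_def by blast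
  next
    case False
    then have rr: "\<forall>x \<in> carrier R. c \<otimes> x = \<zero> \<longrightarrow> x = \<zero>" using reg by blast
    then have "y = \<zero>" using cy0 yc by blast
    then have dc: "d \<otimes> c = \<one>" using J(5) d xc by simp
    then have "c \<otimes> d = \<one>" using ss_df[OF ss d(1) c] by simp
    then show ?thesis using dc c d unfolding Units_def by blast
  qed
qed

end



lemma rg_iff: "rg Q \<longleftrightarrow> ring Q" by (simp add: rg_def)

context rg begin

lemma unit_div:
  assumes u: "u \<in> Units R" and v: "v \<in> carrier R" and q: "q \<in> carrier R"
  shows "q = inv u \<otimes> v \<longleftrightarrow> u \<otimes> q = v"
proof
  assume "q = inv u \<otimes> v"
  moreover have "u \<in> carrier R" using u by blast
  ultimately show "u \<otimes> q = v" using u v by (simp add: m_assoc[symmetric])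
next
  assume h: "u \<otimes> q = v"
  have "inv u \<otimes> v = inv u \<otimes> (u \<otimes> q)" using h by simp
  also have "\<dots> = q" using u q Units_closed[OF u] by (simp add: m_assoc[symmetric])
  finally show "q = inv u \<otimes> v" by simp
qed

lemma unit_div_r:
  assumes u: "u \<in> Units R" and v: "v \<in> carrier R" and q: "q \<in> carrier R"
  shows "q = v \<otimes> inv u \<longleftrightarrow> q \<otimes> u = v"
proof
  assume "q = v \<otimes> inv u"
  moreover have "u \<in> carrier R" using u by blast
  ultimately show "q \<otimes> u = v" using u v by (simp add: m_assoc)
next
  assume h: "q \<otimes> u = v"
  have "v \<otimes> inv u = (q \<otimes> u) \<otimes> inv u" using h by simp
  also have "\<dots> = q" using u q Units_closed[OF u] by (simp add: m_assoc)
  finally show "q = v \<otimes> inv u" by simp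
qed

lemma lrfD:
  assumes "left_ring_of_fractions R S Q \<phi>"
  shows "ring Q" "\<phi> \<in> ring_hom R Q" "\<And>s. s \<in> S \<Longrightarrow> \<phi> s \<in> Units Q"
    "\<And>q. q \<in> carrier Q \<Longrightarrow> \<exists>s \<in> S. \<exists>r \<in> carrier R. q = inv\<^bsub>Q\<^esub> (\<phi> s) \<otimes>\<^bsub>Q\<^esub> \<phi> r"
    "\<And>r. r \<in> carrier R \<Longrightarrow> \<phi> r = \<zero>\<^bsub>Q\<^esub> \<longleftrightarrow> (\<exists>s \<in> S. s \<otimes> r = \<zero>)"
  using assms unfolding left_ring_of_fractions_def by blast+

lemma rrfD:
  assumes "right_ring_of_fractions R S Q \<phi>"
  shows "ring Q" "\<phi> \<in> ring_hom R Q" "\<And>s. s \<in> S \<Longrightarrow> \<phi> s \<in> Units Q"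
    "\<And>q. q \<in> carrier Q \<Longrightarrow> \<exists>s \<in> S. \<exists>r \<in> carrier R. q = \<phi> r \<otimes>\<^bsub>Q\<^esub> inv\<^bsub>Q\<^esub> (\<phi> s)"
    "\<And>r. r \<in> carrier R \<Longrightarrow> \<phi> r = \<zero>\<^bsub>Q\<^esub> \<longleftrightarrow> (\<exists>s \<in> S. r \<otimes> s = \<zero>)"
  using assms unfolding right_ring_of_fractions_def by blast+

lemma hom_minus:
  fixes Q :: "'b ring"
  assumes "ring Q" "\<phi> \<in> ring_hom R Q" "u \<in> carrier R" "v \<in> carrier R"
  shows "\<phi> (u \<ominus> v) = \<phi> u \<ominus>\<^bsub>Q\<^esub> \<phi> v"
proof -
  interpret H: ring_hom_ring R Q \<phi> by (rule ring_hom_ringI2[OF ring_axioms assms(1,2)])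
  have "\<phi> (u \<ominus> v) = \<phi> (u \<oplus> \<ominus> v)" by (simp add: minus_eq)
  also have "\<dots> = \<phi> u \<oplus>\<^bsub>Q\<^esub> \<phi> (\<ominus> v)" using assms(3,4) by (simp add: ring_hom_add[OF assms(2)])
  also have "\<dots> = \<phi> u \<oplus>\<^bsub>Q\<^esub> \<ominus>\<^bsub>Q\<^esub> \<phi> v" using assms(4) by (simp add: H.hom_a_inv)
  also have "\<dots> = \<phi> u \<ominus>\<^bsub>Q\<^esub> \<phi> v" by (simp add: H.S.minus_eq)
  finally show ?thesis .
qed

lemma hom_eq_zero:
  fixes Q :: "'b ring"
  assumes "ring Q" "\<phi> \<in> ring_hom R Q" "u \<in> carrier R" "v \<in> carrier R" "\<phi> u = \<phi> v"
  shows "\<phi> (u \<ominus> v) = \<zero>\<^bsub>Q\<^esub>"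
proof -
  interpret Q: rg Q using assms(1) by (simp add: rg_iff)
  have c: "\<phi> v \<in> carrier Q" by (rule ring_hom_closed[OF assms(2,4)])
  have "\<phi> (u \<ominus> v) = \<phi> u \<ominus>\<^bsub>Q\<^esub> \<phi> v" by (rule hom_minus[OF assms(1-4)])
  also have "\<dots> = \<phi> v \<ominus>\<^bsub>Q\<^esub> \<phi> v" by (simp only: assms(5))
  also have "\<dots> = \<zero>\<^bsub>Q\<^esub>" using Q.r_right_minus_eq[OF c c] by blast
  finally show ?thesis .
qed

lemma lrf_eq:
  assumes L: "left_ring_of_fractions R S Q \<phi>" and SC: "S \<subseteq> carrier R"
    and u: "u \<in> carrier R" and v: "v \<in> carrier R" and e: "\<phi> u = \<phi> v"
  shows "\<exists>s \<in> S. s \<otimes> u = s \<otimes> v"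
proof -
  note D = lrfD[OF L]
  have "\<phi> (u \<ominus> v) = \<zero>\<^bsub>Q\<^esub>" by (rule hom_eq_zero[OF D(1,2) u v e])
  then obtain s where s: "s \<in> S" "s \<otimes> (u \<ominus> v) = \<zero>" using D(5) u v by blast
  have sc: "s \<in> carrier R" using s SC by blast
  have "s \<otimes> u \<ominus> s \<otimes> v = \<zero>" using s(2) sc u v by (simp add: minus_eq r_distr r_minus)
  then have "s \<otimes> u = s \<otimes> v" using sc u v by simp
  then show ?thesis using s by blast
qed

lemma rrf_eq:
  assumes L: "right_ring_of_fractions R S Q \<phi>" and SC: "S \<subseteq> carrier R"
    and u: "u \<in> carrier R" and v: "v \<in> carrier R" and e: "\<phi> u = \<phi> v"
  shows "\<exists>s \<in> S. u \<otimes> s = v \<otimes> s"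
proof -
  note D = rrfD[OF L]
  have "\<phi> (u \<ominus> v) = \<zero>\<^bsub>Q\<^esub>" by (rule hom_eq_zero[OF D(1,2) u v e])
  then obtain s where s: "s \<in> S" "(u \<ominus> v) \<otimes> s = \<zero>" using D(5) u v by blast
  have sc: "s \<in> carrier R" using s SC by blast
  have "u \<otimes> s \<ominus> v \<otimes> s = \<zero>" using s(2) sc u v by (simp add: minus_eq l_distr l_minus)
  then have "u \<otimes> s = v \<otimes> s" using sc u v by simp
  then show ?thesis using s by blast
qed

end



context rg begin

lemma lrf_units:
  fixes Q :: "'b ring"
  assumes L: "left_ring_of_fractions R S Q \<phi>" and SC: "S \<subseteq> regular_elems R"
    and ss: "semisimple_ring Q" and c: "c \<in> regular_elems R"
  shows "\<phi> c \<in> Units Q"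
proof -
  note D = lrfD[OF L]
  interpret Q: rg Q using D(1) by (simp add: rg_iff)
  have cc: "c \<in> carrier R" by (rule reg_carrier[OF c])
  have pc: "\<phi> c \<in> carrier Q" by (rule ring_hom_closed[OF D(2) cc])
  have z0: "\<phi> \<zero> = \<zero>\<^bsub>Q\<^esub>" by (rule ring_hom_zero[OF D(2) ring_axioms D(1)])
  have "\<forall>x\<in>carrier Q. x \<otimes>\<^bsub>Q\<^esub> \<phi> c = \<zero>\<^bsub>Q\<^esub> \<longrightarrow> x = \<zero>\<^bsub>Q\<^esub>"
  proof (intro ballI impI)
    fix x assume x: "x \<in> carrier Q" and h: "x \<otimes>\<^bsub>Q\<^esub> \<phi> c = \<zero>\<^bsub>Q\<^esub>"
    obtain s r where s: "s \<in> S" and r: "r \<in> carrier R" and xe: "x = inv\<^bsub>Q\<^esub> (\<phi> s) \<otimes>\<^bsub>Q\<^esub> \<phi> r"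
      using D(4)[OF x] by blast
    have u: "\<phi> s \<in> Units Q" by (rule D(3)[OF s])
    have uc: "\<phi> s \<in> carrier Q" using u by blast
    have pr: "\<phi> r \<in> carrier Q" by (rule ring_hom_closed[OF D(2) r])
    have ux: "\<phi> s \<otimes>\<^bsub>Q\<^esub> x = \<phi> r" using Q.unit_div[OF u pr x] xe by blast
    have "\<phi> (r \<otimes> c) = \<phi> r \<otimes>\<^bsub>Q\<^esub> \<phi> c" by (rule ring_hom_mult[OF D(2) r cc])
    also have "\<dots> = (\<phi> s \<otimes>\<^bsub>Q\<^esub> x) \<otimes>\<^bsub>Q\<^esub> \<phi> c" by (simp only: ux)
    also have "\<dots> = \<phi> s \<otimes>\<^bsub>Q\<^esub> (x \<otimes>\<^bsub>Q\<^esub> \<phi> c)" using uc x pc by (simp add: Q.m_assoc)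
    also have "\<dots> = \<zero>\<^bsub>Q\<^esub>" using h uc by simp
    finally have "\<phi> (r \<otimes> c) = \<zero>\<^bsub>Q\<^esub>" .
    then obtain s' where s': "s' \<in> S" "s' \<otimes> (r \<otimes> c) = \<zero>" using D(5)[of "r \<otimes> c"] r cc by blast
    have s'C: "s' \<in> regular_elems R" using s' SC by blast
    have s'c: "s' \<in> carrier R" by (rule reg_carrier[OF s'C])
    have "(s' \<otimes> r) \<otimes> c = \<zero>" using s'(2) s'c r cc by (simp add: m_assoc)
    then have "s' \<otimes> r = \<zero>" using reg_left[OF c] s'c r by blast
    then have "r = \<zero>" using reg_right[OF s'C r] by blast
    then show "x = \<zero>\<^bsub>Q\<^esub>" using xe z0 u by simp
  qed
  then show ?thesis using Q.ss_unit[OF ss pc] by blast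
qed

lemma rrf_units:
  fixes Q :: "'b ring"
  assumes L: "right_ring_of_fractions R S Q \<phi>" and SC: "S \<subseteq> regular_elems R"
    and ss: "semisimple_ring Q" and c: "c \<in> regular_elems R"
  shows "\<phi> c \<in> Units Q"
proof -
  note D = rrfD[OF L]
  interpret Q: rg Q using D(1) by (simp add: rg_iff)
  have cc: "c \<in> carrier R" by (rule reg_carrier[OF c])
  have pc: "\<phi> c \<in> carrier Q" by (rule ring_hom_closed[OF D(2) cc])
  have z0: "\<phi> \<zero> = \<zero>\<^bsub>Q\<^esub>" by (rule ring_hom_zero[OF D(2) ring_axioms D(1)])
  have "\<forall>x\<in>carrier Q. \<phi> c \<otimes>\<^bsub>Q\<^esub> x = \<zero>\<^bsub>Q\<^esub> \<longrightarrow> x = \<zero>\<^bsub>Q\<^esub>"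
  proof (intro ballI impI)
    fix x assume x: "x \<in> carrier Q" and h: "\<phi> c \<otimes>\<^bsub>Q\<^esub> x = \<zero>\<^bsub>Q\<^esub>"
    obtain s r where s: "s \<in> S" and r: "r \<in> carrier R" and xe: "x = \<phi> r \<otimes>\<^bsub>Q\<^esub> inv\<^bsub>Q\<^esub> (\<phi> s)"
      using D(4)[OF x] by blast
    have u: "\<phi> s \<in> Units Q" by (rule D(3)[OF s])
    have uc: "\<phi> s \<in> carrier Q" using u by blast
    have pr: "\<phi> r \<in> carrier Q" by (rule ring_hom_closed[OF D(2) r])
    have ux: "x \<otimes>\<^bsub>Q\<^esub> \<phi> s = \<phi> r" using Q.unit_div_r[OF u pr x] xe by blast
    have "\<phi> (c \<otimes> r) = \<phi> c \<otimes>\<^bsub>Q\<^esub> \<phi> r" by (rule ring_hom_mult[OF D(2) cc r])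
    also have "\<dots> = \<phi> c \<otimes>\<^bsub>Q\<^esub> (x \<otimes>\<^bsub>Q\<^esub> \<phi> s)" by (simp only: ux)
    also have "\<dots> = (\<phi> c \<otimes>\<^bsub>Q\<^esub> x) \<otimes>\<^bsub>Q\<^esub> \<phi> s" using uc x pc by (simp add: Q.m_assoc)
    also have "\<dots> = \<zero>\<^bsub>Q\<^esub>" using h uc by simp
    finally have "\<phi> (c \<otimes> r) = \<zero>\<^bsub>Q\<^esub>" .
    then obtain s' where s': "s' \<in> S" "(c \<otimes> r) \<otimes> s' = \<zero>" using D(5)[of "c \<otimes> r"] r cc by blast
    have s'C: "s' \<in> regular_elems R" using s' SC by blast
    have s'c: "s' \<in> carrier R" by (rule reg_carrier[OF s'C])
    have "c \<otimes> (r \<otimes> s') = \<zero>" using s'(2) s'c r cc by (simp add: m_assoc)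
    then have "r \<otimes> s' = \<zero>" using reg_right[OF c] s'c r by blast
    then have "r = \<zero>" using reg_left[OF s'C r] by blast
    then show "x = \<zero>\<^bsub>Q\<^esub>" using xe z0 u by simp
  qed
  then show ?thesis using Q.ss_unit[OF ss pc] by blast
qed

lemma reg_mc: "\<one> \<noteq> \<zero> \<Longrightarrow> mult_closed_set R (regular_elems R)"
  unfolding mult_closed_set_def using reg_sub_carrier reg_one reg_zero reg_mult by blast

lemma lrf_left_ore_C:
  fixes Q :: "'b ring"
  assumes L: "left_ring_of_fractions R S Q \<phi>" and SC: "S \<subseteq> regular_elems R"
    and U: "\<And>c. c \<in> regular_elems R \<Longrightarrow> \<phi> c \<in> Units Q" and nz: "\<one> \<noteq> \<zero>"
  shows "left_ore_set R (regular_elems R)"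
  unfolding left_ore_set_def
proof (intro conjI ballI)
  show "mult_closed_set R (regular_elems R)" by (rule reg_mc[OF nz])
  fix r c assume r: "r \<in> carrier R" and c: "c \<in> regular_elems R"
  note D = lrfD[OF L]
  interpret Q: rg Q using D(1) by (simp add: rg_iff)
  have SCc: "S \<subseteq> carrier R" using SC reg_sub_carrier by blast
  have cc: "c \<in> carrier R" by (rule reg_carrier[OF c])
  have uc: "\<phi> c \<in> Units Q" by (rule U[OF c])
  have pc: "\<phi> c \<in> carrier Q" using uc by blast
  have pr: "\<phi> r \<in> carrier Q" by (rule ring_hom_closed[OF D(2) r])
  define q where "q = \<phi> r \<otimes>\<^bsub>Q\<^esub> inv\<^bsub>Q\<^esub> (\<phi> c)"
  have qc: "q \<in> carrier Q" unfolding q_def using pr uc by simp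
  have qc2: "q \<otimes>\<^bsub>Q\<^esub> \<phi> c = \<phi> r" using Q.unit_div_r[OF uc pr qc] q_def by blast
  obtain s a where s: "s \<in> S" and a: "a \<in> carrier R" and qe: "q = inv\<^bsub>Q\<^esub> (\<phi> s) \<otimes>\<^bsub>Q\<^esub> \<phi> a"
    using D(4)[OF qc] by blast
  have us: "\<phi> s \<in> Units Q" by (rule D(3)[OF s])
  have psc: "\<phi> s \<in> carrier Q" using us by blast
  have pa: "\<phi> a \<in> carrier Q" by (rule ring_hom_closed[OF D(2) a])
  have sq: "\<phi> s \<otimes>\<^bsub>Q\<^esub> q = \<phi> a" using Q.unit_div[OF us pa qc] qe by blast
  have sc: "s \<in> carrier R" using s SCc by blast
  have "\<phi> (s \<otimes> r) = \<phi> s \<otimes>\<^bsub>Q\<^esub> \<phi> r" by (rule ring_hom_mult[OF D(2) sc r])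
  also have "\<dots> = \<phi> s \<otimes>\<^bsub>Q\<^esub> (q \<otimes>\<^bsub>Q\<^esub> \<phi> c)" by (simp only: qc2)
  also have "\<dots> = (\<phi> s \<otimes>\<^bsub>Q\<^esub> q) \<otimes>\<^bsub>Q\<^esub> \<phi> c" using psc qc pc by (simp add: Q.m_assoc)
  also have "\<dots> = \<phi> a \<otimes>\<^bsub>Q\<^esub> \<phi> c" by (simp only: sq)
  also have "\<dots> = \<phi> (a \<otimes> c)" by (rule ring_hom_mult[OF D(2) a cc, symmetric])
  finally have "\<phi> (s \<otimes> r) = \<phi> (a \<otimes> c)" .
  then obtain s' where s': "s' \<in> S" "s' \<otimes> (s \<otimes> r) = s' \<otimes> (a \<otimes> c)"
    using lrf_eq[OF L SCc, of "s \<otimes> r" "a \<otimes> c"] sc r a cc by auto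
  have s'c: "s' \<in> carrier R" using s' SCc by blast
  have "(s' \<otimes> s) \<otimes> r = (s' \<otimes> a) \<otimes> c" using s'(2) s'c sc r a cc by (simp add: m_assoc)
  moreover have "s' \<otimes> s \<in> regular_elems R" using reg_mult s s' SC by blast
  moreover have "s' \<otimes> a \<in> carrier R" using s'c a by simp
  ultimately show "\<exists>t\<in>regular_elems R. \<exists>a\<in>carrier R. t \<otimes> r = a \<otimes> c" by blast
qed

lemma rrf_right_ore_C:
  fixes Q :: "'b ring"
  assumes L: "right_ring_of_fractions R S Q \<phi>" and SC: "S \<subseteq> regular_elems R"
    and U: "\<And>c. c \<in> regular_elems R \<Longrightarrow> \<phi> c \<in> Units Q" and nz: "\<one> \<noteq> \<zero>"
  shows "right_ore_set R (regular_elems R)"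
  unfolding right_ore_set_def
proof (intro conjI ballI)
  show "mult_closed_set R (regular_elems R)" by (rule reg_mc[OF nz])
  fix r c assume r: "r \<in> carrier R" and c: "c \<in> regular_elems R"
  note D = rrfD[OF L]
  interpret Q: rg Q using D(1) by (simp add: rg_iff)
  have SCc: "S \<subseteq> carrier R" using SC reg_sub_carrier by blast
  have cc: "c \<in> carrier R" by (rule reg_carrier[OF c])
  have uc: "\<phi> c \<in> Units Q" by (rule U[OF c])
  have pc: "\<phi> c \<in> carrier Q" using uc by blast
  have pr: "\<phi> r \<in> carrier Q" by (rule ring_hom_closed[OF D(2) r])
  define q where "q = inv\<^bsub>Q\<^esub> (\<phi> c) \<otimes>\<^bsub>Q\<^esub> \<phi> r"
  have qc: "q \<in> carrier Q" unfolding q_def using pr uc by simp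
  have qc2: "\<phi> c \<otimes>\<^bsub>Q\<^esub> q = \<phi> r" using Q.unit_div[OF uc pr qc] q_def by blast
  obtain s a where s: "s \<in> S" and a: "a \<in> carrier R" and qe: "q = \<phi> a \<otimes>\<^bsub>Q\<^esub> inv\<^bsub>Q\<^esub> (\<phi> s)"
    using D(4)[OF qc] by blast
  have us: "\<phi> s \<in> Units Q" by (rule D(3)[OF s])
  have psc: "\<phi> s \<in> carrier Q" using us by blast
  have pa: "\<phi> a \<in> carrier Q" by (rule ring_hom_closed[OF D(2) a])
  have sq: "q \<otimes>\<^bsub>Q\<^esub> \<phi> s = \<phi> a" using Q.unit_div_r[OF us pa qc] qe by blast
  have sc: "s \<in> carrier R" using s SCc by blast
  have "\<phi> (r \<otimes> s) = \<phi> r \<otimes>\<^bsub>Q\<^esub> \<phi> s" by (rule ring_hom_mult[OF D(2) r sc])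
  also have "\<dots> = (\<phi> c \<otimes>\<^bsub>Q\<^esub> q) \<otimes>\<^bsub>Q\<^esub> \<phi> s" by (simp only: qc2)
  also have "\<dots> = \<phi> c \<otimes>\<^bsub>Q\<^esub> (q \<otimes>\<^bsub>Q\<^esub> \<phi> s)" using psc qc pc by (simp add: Q.m_assoc)
  also have "\<dots> = \<phi> c \<otimes>\<^bsub>Q\<^esub> \<phi> a" by (simp only: sq)
  also have "\<dots> = \<phi> (c \<otimes> a)" by (rule ring_hom_mult[OF D(2) cc a, symmetric])
  finally have "\<phi> (r \<otimes> s) = \<phi> (c \<otimes> a)" .
  then obtain s' where s': "s' \<in> S" "(r \<otimes> s) \<otimes> s' = (c \<otimes> a) \<otimes> s'"
    using rrf_eq[OF L SCc, of "r \<otimes> s" "c \<otimes> a"] sc r a cc by auto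
  have s'c: "s' \<in> carrier R" using s' SCc by blast
  have "r \<otimes> (s \<otimes> s') = c \<otimes> (a \<otimes> s')" using s'(2) s'c sc r a cc by (simp add: m_assoc)
  moreover have "s \<otimes> s' \<in> regular_elems R" using reg_mult s s' SC by blast
  moreover have "a \<otimes> s' \<in> carrier R" using s'c a by simp
  ultimately show "\<exists>t\<in>regular_elems R. \<exists>a\<in>carrier R. r \<otimes> t = c \<otimes> a" by blast
qed

end



definition frac_map :: "'a ring \<Rightarrow> 'a set \<Rightarrow> ('a \<Rightarrow> 'b) \<Rightarrow> 'b ring \<Rightarrow> ('a \<Rightarrow> 'c) \<Rightarrow> 'c ring \<Rightarrow> 'b \<Rightarrow> 'c" where
  "frac_map R S \<phi> Q \<psi> Q' q = (SOME q'. \<exists>s\<in>S. \<exists>r\<in>carrier R.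
      q = inv\<^bsub>Q\<^esub> (\<phi> s) \<otimes>\<^bsub>Q\<^esub> \<phi> r \<and> q' = inv\<^bsub>Q'\<^esub> (\<psi> s) \<otimes>\<^bsub>Q'\<^esub> \<psi> r)"

context rg begin

lemma one_in_S_left: "left_ore_set R S \<Longrightarrow> \<one> \<in> S"
  unfolding left_ore_set_def mult_closed_set_def by blast
lemma one_in_S_right: "right_ore_set R S \<Longrightarrow> \<one> \<in> S"
  unfolding right_ore_set_def mult_closed_set_def by blast

lemma zero_iff_left:
  assumes SC: "S \<subseteq> regular_elems R" and one: "\<one> \<in> S" and r: "r \<in> carrier R"
  shows "(\<exists>s\<in>S. s \<otimes> r = \<zero>) \<longleftrightarrow> r = \<zero>"
proof
  assume "\<exists>s\<in>S. s \<otimes> r = \<zero>"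
  then obtain s where "s \<in> S" "s \<otimes> r = \<zero>" by blast
  then show "r = \<zero>" using reg_right[of s r] SC r by blast
next
  assume "r = \<zero>" then show "\<exists>s\<in>S. s \<otimes> r = \<zero>" using one by (intro bexI[of _ \<one>]) auto
qed

lemma zero_iff_right:
  assumes SC: "S \<subseteq> regular_elems R" and one: "\<one> \<in> S" and r: "r \<in> carrier R"
  shows "(\<exists>s\<in>S. r \<otimes> s = \<zero>) \<longleftrightarrow> r = \<zero>"
proof
  assume "\<exists>s\<in>S. r \<otimes> s = \<zero>"
  then obtain s where "s \<in> S" "r \<otimes> s = \<zero>" by blast
  then show "r = \<zero>" using reg_left[of s r] SC r by blast
next
  assume "r = \<zero>" then show "\<exists>s\<in>S. r \<otimes> s = \<zero>" using one by (intro bexI[of _ \<one>]) auto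
qed

lemma lrf_to_rrf:
  fixes Q :: "'b ring"
  assumes L: "left_ring_of_fractions R S Q \<phi>" and SC: "S \<subseteq> regular_elems R"
    and RO: "right_ore_set R S"
  shows "right_ring_of_fractions R S Q \<phi>"
proof -
  note D = lrfD[OF L]
  interpret Q: rg Q using D(1) by (simp add: rg_iff)
  have SCc: "S \<subseteq> carrier R" using SC reg_sub_carrier by blast
  have one: "\<one> \<in> S" by (rule one_in_S_right[OF RO])
  have rep: "\<exists>s \<in> S. \<exists>r \<in> carrier R. q = \<phi> r \<otimes>\<^bsub>Q\<^esub> inv\<^bsub>Q\<^esub> (\<phi> s)" if q: "q \<in> carrier Q" for q
  proof -
    obtain s r where s: "s \<in> S" and r: "r \<in> carrier R" and qe: "q = inv\<^bsub>Q\<^esub> (\<phi> s) \<otimes>\<^bsub>Q\<^esub> \<phi> r"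
      using D(4)[OF q] by blast
    obtain t a where t: "t \<in> S" and a: "a \<in> carrier R" and e: "r \<otimes> t = s \<otimes> a"
      using RO r s unfolding right_ore_set_def by blast
    have sc: "s \<in> carrier R" and tc: "t \<in> carrier R" using s t SCc by auto
    have us: "\<phi> s \<in> Units Q" by (rule D(3)[OF s])
    have ut: "\<phi> t \<in> Units Q" by (rule D(3)[OF t])
    have psc: "\<phi> s \<in> carrier Q" and ptc: "\<phi> t \<in> carrier Q" using us ut by blast+
    have pr: "\<phi> r \<in> carrier Q" by (rule ring_hom_closed[OF D(2) r])
    have pa: "\<phi> a \<in> carrier Q" by (rule ring_hom_closed[OF D(2) a])
    have sq: "\<phi> s \<otimes>\<^bsub>Q\<^esub> q = \<phi> r" using Q.unit_div[OF us pr q] qe by blast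
    have "\<phi> s \<otimes>\<^bsub>Q\<^esub> (q \<otimes>\<^bsub>Q\<^esub> \<phi> t) = (\<phi> s \<otimes>\<^bsub>Q\<^esub> q) \<otimes>\<^bsub>Q\<^esub> \<phi> t"
      using psc q ptc by (simp add: Q.m_assoc)
    also have "\<dots> = \<phi> r \<otimes>\<^bsub>Q\<^esub> \<phi> t" by (simp only: sq)
    also have "\<dots> = \<phi> (r \<otimes> t)" by (rule ring_hom_mult[OF D(2) r tc, symmetric])
    also have "\<dots> = \<phi> (s \<otimes> a)" by (simp only: e)
    also have "\<dots> = \<phi> s \<otimes>\<^bsub>Q\<^esub> \<phi> a" by (rule ring_hom_mult[OF D(2) sc a])
    finally have "q \<otimes>\<^bsub>Q\<^esub> \<phi> t = \<phi> a" using Q.Units_l_cancel[OF us] q ptc pa by simp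
    then have "q = \<phi> a \<otimes>\<^bsub>Q\<^esub> inv\<^bsub>Q\<^esub> (\<phi> t)" using Q.unit_div_r[OF ut pa q] by blast
    then show ?thesis using t a by blast
  qed
  have ker: "\<phi> r = \<zero>\<^bsub>Q\<^esub> \<longleftrightarrow> (\<exists>s \<in> S. r \<otimes> s = \<zero>)" if r: "r \<in> carrier R" for r
    using D(5)[OF r] zero_iff_left[OF SC one r] zero_iff_right[OF SC one r] by simp
  show ?thesis unfolding right_ring_of_fractions_def
    using D(1,2,3) rep ker by blast
qed

lemma rrf_to_lrf:
  fixes Q :: "'b ring"
  assumes L: "right_ring_of_fractions R S Q \<phi>" and SC: "S \<subseteq> regular_elems R"
    and LO: "left_ore_set R S"
  shows "left_ring_of_fractions R S Q \<phi>"
proof -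
  note D = rrfD[OF L]
  interpret Q: rg Q using D(1) by (simp add: rg_iff)
  have SCc: "S \<subseteq> carrier R" using SC reg_sub_carrier by blast
  have one: "\<one> \<in> S" by (rule one_in_S_left[OF LO])
  have rep: "\<exists>s \<in> S. \<exists>r \<in> carrier R. q = inv\<^bsub>Q\<^esub> (\<phi> s) \<otimes>\<^bsub>Q\<^esub> \<phi> r" if q: "q \<in> carrier Q" for q
  proof -
    obtain s r where s: "s \<in> S" and r: "r \<in> carrier R" and qe: "q = \<phi> r \<otimes>\<^bsub>Q\<^esub> inv\<^bsub>Q\<^esub> (\<phi> s)"
      using D(4)[OF q] by blast
    obtain t a where t: "t \<in> S" and a: "a \<in> carrier R" and e: "t \<otimes> r = a \<otimes> s"
      using LO r s unfolding left_ore_set_def by blast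
    have sc: "s \<in> carrier R" and tc: "t \<in> carrier R" using s t SCc by auto
    have us: "\<phi> s \<in> Units Q" by (rule D(3)[OF s])
    have ut: "\<phi> t \<in> Units Q" by (rule D(3)[OF t])
    have psc: "\<phi> s \<in> carrier Q" and ptc: "\<phi> t \<in> carrier Q" using us ut by blast+
    have pr: "\<phi> r \<in> carrier Q" by (rule ring_hom_closed[OF D(2) r])
    have pa: "\<phi> a \<in> carrier Q" by (rule ring_hom_closed[OF D(2) a])
    have sq: "q \<otimes>\<^bsub>Q\<^esub> \<phi> s = \<phi> r" using Q.unit_div_r[OF us pr q] qe by blast
    have "(\<phi> t \<otimes>\<^bsub>Q\<^esub> q) \<otimes>\<^bsub>Q\<^esub> \<phi> s = \<phi> t \<otimes>\<^bsub>Q\<^esub> (q \<otimes>\<^bsub>Q\<^esub> \<phi> s)"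
      using psc q ptc by (simp add: Q.m_assoc)
    also have "\<dots> = \<phi> t \<otimes>\<^bsub>Q\<^esub> \<phi> r" by (simp only: sq)
    also have "\<dots> = \<phi> (t \<otimes> r)" by (rule ring_hom_mult[OF D(2) tc r, symmetric])
    also have "\<dots> = \<phi> (a \<otimes> s)" by (simp only: e)
    also have "\<dots> = \<phi> a \<otimes>\<^bsub>Q\<^esub> \<phi> s" by (rule ring_hom_mult[OF D(2) a sc])
    finally have e2: "(\<phi> t \<otimes>\<^bsub>Q\<^esub> q) \<otimes>\<^bsub>Q\<^esub> \<phi> s = \<phi> a \<otimes>\<^bsub>Q\<^esub> \<phi> s" .
    have "\<phi> t \<otimes>\<^bsub>Q\<^esub> q = \<phi> a"
    proof -
      have "\<phi> t \<otimes>\<^bsub>Q\<^esub> q = ((\<phi> t \<otimes>\<^bsub>Q\<^esub> q) \<otimes>\<^bsub>Q\<^esub> \<phi> s) \<otimes>\<^bsub>Q\<^esub> inv\<^bsub>Q\<^esub> (\<phi> s)"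
        using ptc q us psc by (simp add: Q.m_assoc)
      also have "\<dots> = (\<phi> a \<otimes>\<^bsub>Q\<^esub> \<phi> s) \<otimes>\<^bsub>Q\<^esub> inv\<^bsub>Q\<^esub> (\<phi> s)" by (simp only: e2)
      also have "\<dots> = \<phi> a" using pa us psc by (simp add: Q.m_assoc)
      finally show ?thesis .
    qed
    then have "q = inv\<^bsub>Q\<^esub> (\<phi> t) \<otimes>\<^bsub>Q\<^esub> \<phi> a" using Q.unit_div[OF ut pa q] by blast
    then show ?thesis using t a by blast
  qed
  have ker: "\<phi> r = \<zero>\<^bsub>Q\<^esub> \<longleftrightarrow> (\<exists>s \<in> S. s \<otimes> r = \<zero>)" if r: "r \<in> carrier R" for r
    using D(5)[OF r] zero_iff_left[OF SC one r] zero_iff_right[OF SC one r] by simp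
  show ?thesis unfolding left_ring_of_fractions_def
    using D(1,2,3) rep ker by blast
qed

end



context rg begin

lemma unit_cancel_l: "u \<in> Units R \<Longrightarrow> x \<in> carrier R \<Longrightarrow> u \<otimes> (inv u \<otimes> x) = x"
  using unit_div[of u x "inv u \<otimes> x"] by auto

lemma lo_mult: "left_ore_set R S \<Longrightarrow> s \<in> S \<Longrightarrow> t \<in> S \<Longrightarrow> s \<otimes> t \<in> S"
  unfolding left_ore_set_def mult_closed_set_def by blast

lemma frac_cancel:
  fixes Q :: "'b ring"
  assumes L: "left_ring_of_fractions R S Q \<phi>" and SCc: "S \<subseteq> carrier R"
    and s: "s \<in> S" and x: "x \<in> carrier R" and r: "r \<in> carrier R"
  shows "\<phi> (x \<otimes> s) \<otimes>\<^bsub>Q\<^esub> (inv\<^bsub>Q\<^esub> (\<phi> s) \<otimes>\<^bsub>Q\<^esub> \<phi> r) = \<phi> (x \<otimes> r)"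
proof -
  note D = lrfD[OF L]
  interpret Q: rg Q using D(1) by (simp add: rg_iff)
  have sc: "s \<in> carrier R" using s SCc by blast
  have us: "\<phi> s \<in> Units Q" by (rule D(3)[OF s])
  have psc: "\<phi> s \<in> carrier Q" using us by blast
  have pr: "\<phi> r \<in> carrier Q" by (rule ring_hom_closed[OF D(2) r])
  have px: "\<phi> x \<in> carrier Q" by (rule ring_hom_closed[OF D(2) x])
  have ic: "inv\<^bsub>Q\<^esub> (\<phi> s) \<otimes>\<^bsub>Q\<^esub> \<phi> r \<in> carrier Q" using us pr by simp
  have "\<phi> (x \<otimes> s) \<otimes>\<^bsub>Q\<^esub> (inv\<^bsub>Q\<^esub> (\<phi> s) \<otimes>\<^bsub>Q\<^esub> \<phi> r)
      = (\<phi> x \<otimes>\<^bsub>Q\<^esub> \<phi> s) \<otimes>\<^bsub>Q\<^esub> (inv\<^bsub>Q\<^esub> (\<phi> s) \<otimes>\<^bsub>Q\<^esub> \<phi> r)"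
    by (simp only: ring_hom_mult[OF D(2) x sc])
  also have "\<dots> = \<phi> x \<otimes>\<^bsub>Q\<^esub> (\<phi> s \<otimes>\<^bsub>Q\<^esub> (inv\<^bsub>Q\<^esub> (\<phi> s) \<otimes>\<^bsub>Q\<^esub> \<phi> r))"
    using px psc ic by (simp only: Q.m_assoc)
  also have "\<dots> = \<phi> x \<otimes>\<^bsub>Q\<^esub> \<phi> r" using Q.unit_cancel_l[OF us pr] by simp
  also have "\<dots> = \<phi> (x \<otimes> r)" by (rule ring_hom_mult[OF D(2) x r, symmetric])
  finally show ?thesis .
qed

lemma frac_eq_iff:
  fixes Q :: "'b ring"
  assumes L: "left_ring_of_fractions R S Q \<phi>" and SC: "S \<subseteq> regular_elems R"
    and LO: "left_ore_set R S"
    and s: "s \<in> S" and s': "s' \<in> S" and t: "t \<in> S" and r: "r \<in> carrier R" and r': "r' \<in> carrier R"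
    and a: "a \<in> carrier R" and e: "t \<otimes> s = a \<otimes> s'"
  shows "(inv\<^bsub>Q\<^esub> (\<phi> s) \<otimes>\<^bsub>Q\<^esub> \<phi> r = inv\<^bsub>Q\<^esub> (\<phi> s') \<otimes>\<^bsub>Q\<^esub> \<phi> r')
     \<longleftrightarrow> (\<exists>u\<in>S. u \<otimes> (t \<otimes> r) = u \<otimes> (a \<otimes> r'))"
proof -
  note D = lrfD[OF L]
  interpret Q: rg Q using D(1) by (simp add: rg_iff)
  have SCc: "S \<subseteq> carrier R" using SC reg_sub_carrier by blast
  have tc: "t \<in> carrier R" using t SCc by blast
  have ts: "t \<otimes> s \<in> S" by (rule lo_mult[OF LO t s])
  have uw: "\<phi> (t \<otimes> s) \<in> Units Q" by (rule D(3)[OF ts])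
  have us: "\<phi> s \<in> Units Q" by (rule D(3)[OF s])
  have us': "\<phi> s' \<in> Units Q" by (rule D(3)[OF s'])
  have pr: "\<phi> r \<in> carrier Q" by (rule ring_hom_closed[OF D(2) r])
  have pr': "\<phi> r' \<in> carrier Q" by (rule ring_hom_closed[OF D(2) r'])
  have Xc: "inv\<^bsub>Q\<^esub> (\<phi> s) \<otimes>\<^bsub>Q\<^esub> \<phi> r \<in> carrier Q" using us pr by simp
  have Yc: "inv\<^bsub>Q\<^esub> (\<phi> s') \<otimes>\<^bsub>Q\<^esub> \<phi> r' \<in> carrier Q" using us' pr' by simp
  have wX: "\<phi> (t \<otimes> s) \<otimes>\<^bsub>Q\<^esub> (inv\<^bsub>Q\<^esub> (\<phi> s) \<otimes>\<^bsub>Q\<^esub> \<phi> r) = \<phi> (t \<otimes> r)"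
    by (rule frac_cancel[OF L SCc s tc r])
  have wY: "\<phi> (t \<otimes> s) \<otimes>\<^bsub>Q\<^esub> (inv\<^bsub>Q\<^esub> (\<phi> s') \<otimes>\<^bsub>Q\<^esub> \<phi> r') = \<phi> (a \<otimes> r')"
    unfolding e by (rule frac_cancel[OF L SCc s' a r'])
  have "(inv\<^bsub>Q\<^esub> (\<phi> s) \<otimes>\<^bsub>Q\<^esub> \<phi> r = inv\<^bsub>Q\<^esub> (\<phi> s') \<otimes>\<^bsub>Q\<^esub> \<phi> r')
     \<longleftrightarrow> \<phi> (t \<otimes> r) = \<phi> (a \<otimes> r')"
    using Q.Units_l_cancel[OF uw Xc Yc] wX wY by simp
  also have "\<dots> \<longleftrightarrow> (\<exists>u\<in>S. u \<otimes> (t \<otimes> r) = u \<otimes> (a \<otimes> r'))"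
  proof
    assume "\<phi> (t \<otimes> r) = \<phi> (a \<otimes> r')"
    then show "\<exists>u\<in>S. u \<otimes> (t \<otimes> r) = u \<otimes> (a \<otimes> r')"
      using lrf_eq[OF L SCc, of "t \<otimes> r" "a \<otimes> r'"] tc r a r' by simp
  next
    assume "\<exists>u\<in>S. u \<otimes> (t \<otimes> r) = u \<otimes> (a \<otimes> r')"
    then obtain u where u: "u \<in> S" "u \<otimes> (t \<otimes> r) = u \<otimes> (a \<otimes> r')" by blast
    have uc: "u \<in> carrier R" using u SCc by blast
    have uu: "\<phi> u \<in> Units Q" by (rule D(3)[OF u(1)])
    have c1: "\<phi> (t \<otimes> r) \<in> carrier Q" by (rule ring_hom_closed[OF D(2)]) (use tc r in simp)
    have c2: "\<phi> (a \<otimes> r') \<in> carrier Q" by (rule ring_hom_closed[OF D(2)]) (use a r' in simp)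
    have "\<phi> u \<otimes>\<^bsub>Q\<^esub> \<phi> (t \<otimes> r) = \<phi> (u \<otimes> (t \<otimes> r))"
      by (rule ring_hom_mult[OF D(2) uc, symmetric]) (use tc r in simp)
    also have "\<dots> = \<phi> (u \<otimes> (a \<otimes> r'))" by (simp only: u(2))
    also have "\<dots> = \<phi> u \<otimes>\<^bsub>Q\<^esub> \<phi> (a \<otimes> r')"
      by (rule ring_hom_mult[OF D(2) uc]) (use a r' in simp)
    finally show "\<phi> (t \<otimes> r) = \<phi> (a \<otimes> r')" using Q.Units_l_cancel[OF uu c1 c2] by simp
  qed
  finally show ?thesis .
qed

lemma frac_add:
  fixes Q :: "'b ring"
  assumes L: "left_ring_of_fractions R S Q \<phi>" and SC: "S \<subseteq> regular_elems R"
    and LO: "left_ore_set R S"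
    and s1: "s1 \<in> S" and s2: "s2 \<in> S" and t: "t \<in> S" and r1: "r1 \<in> carrier R" and r2: "r2 \<in> carrier R"
    and a: "a \<in> carrier R" and e: "t \<otimes> s1 = a \<otimes> s2"
  shows "(inv\<^bsub>Q\<^esub> (\<phi> s1) \<otimes>\<^bsub>Q\<^esub> \<phi> r1) \<oplus>\<^bsub>Q\<^esub> (inv\<^bsub>Q\<^esub> (\<phi> s2) \<otimes>\<^bsub>Q\<^esub> \<phi> r2)
       = inv\<^bsub>Q\<^esub> (\<phi> (t \<otimes> s1)) \<otimes>\<^bsub>Q\<^esub> \<phi> (t \<otimes> r1 \<oplus> a \<otimes> r2)"
proof -
  note D = lrfD[OF L]
  interpret Q: rg Q using D(1) by (simp add: rg_iff)
  have SCc: "S \<subseteq> carrier R" using SC reg_sub_carrier by blast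
  have tc: "t \<in> carrier R" using t SCc by blast
  have ts: "t \<otimes> s1 \<in> S" by (rule lo_mult[OF LO t s1])
  have uw: "\<phi> (t \<otimes> s1) \<in> Units Q" by (rule D(3)[OF ts])
  have us1: "\<phi> s1 \<in> Units Q" by (rule D(3)[OF s1])
  have us2: "\<phi> s2 \<in> Units Q" by (rule D(3)[OF s2])
  have pr1: "\<phi> r1 \<in> carrier Q" by (rule ring_hom_closed[OF D(2) r1])
  have pr2: "\<phi> r2 \<in> carrier Q" by (rule ring_hom_closed[OF D(2) r2])
  have X1: "inv\<^bsub>Q\<^esub> (\<phi> s1) \<otimes>\<^bsub>Q\<^esub> \<phi> r1 \<in> carrier Q" using us1 pr1 by simp
  have X2: "inv\<^bsub>Q\<^esub> (\<phi> s2) \<otimes>\<^bsub>Q\<^esub> \<phi> r2 \<in> carrier Q" using us2 pr2 by simp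
  have wc: "\<phi> (t \<otimes> s1) \<in> carrier Q" using uw by blast
  have sumc: "t \<otimes> r1 \<oplus> a \<otimes> r2 \<in> carrier R" using tc r1 a r2 by simp
  have ps: "\<phi> (t \<otimes> r1 \<oplus> a \<otimes> r2) \<in> carrier Q" by (rule ring_hom_closed[OF D(2) sumc])
  have "\<phi> (t \<otimes> s1) \<otimes>\<^bsub>Q\<^esub> ((inv\<^bsub>Q\<^esub> (\<phi> s1) \<otimes>\<^bsub>Q\<^esub> \<phi> r1) \<oplus>\<^bsub>Q\<^esub> (inv\<^bsub>Q\<^esub> (\<phi> s2) \<otimes>\<^bsub>Q\<^esub> \<phi> r2))
     = \<phi> (t \<otimes> s1) \<otimes>\<^bsub>Q\<^esub> (inv\<^bsub>Q\<^esub> (\<phi> s1) \<otimes>\<^bsub>Q\<^esub> \<phi> r1) \<oplus>\<^bsub>Q\<^esub> \<phi> (a \<otimes> s2) \<otimes>\<^bsub>Q\<^esub> (inv\<^bsub>Q\<^esub> (\<phi> s2) \<otimes>\<^bsub>Q\<^esub> \<phi> r2)"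
    using Q.r_distr[OF X1 X2 wc] e by simp
  also have "\<dots> = \<phi> (t \<otimes> r1) \<oplus>\<^bsub>Q\<^esub> \<phi> (a \<otimes> r2)"
    using frac_cancel[OF L SCc s1 tc r1] frac_cancel[OF L SCc s2 a r2] by simp
  also have "\<dots> = \<phi> (t \<otimes> r1 \<oplus> a \<otimes> r2)"
    by (rule ring_hom_add[OF D(2), symmetric]) (use tc r1 a r2 in simp_all)
  finally have "\<phi> (t \<otimes> s1) \<otimes>\<^bsub>Q\<^esub> ((inv\<^bsub>Q\<^esub> (\<phi> s1) \<otimes>\<^bsub>Q\<^esub> \<phi> r1) \<oplus>\<^bsub>Q\<^esub> (inv\<^bsub>Q\<^esub> (\<phi> s2) \<otimes>\<^bsub>Q\<^esub> \<phi> r2))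
     = \<phi> (t \<otimes> r1 \<oplus> a \<otimes> r2)" .
  then show ?thesis using Q.unit_div[OF uw ps] X1 X2 by simp
qed

lemma frac_mult:
  fixes Q :: "'b ring"
  assumes L: "left_ring_of_fractions R S Q \<phi>" and SC: "S \<subseteq> regular_elems R"
    and LO: "left_ore_set R S"
    and s1: "s1 \<in> S" and s2: "s2 \<in> S" and t: "t \<in> S" and r1: "r1 \<in> carrier R" and r2: "r2 \<in> carrier R"
    and a: "a \<in> carrier R" and e: "t \<otimes> r1 = a \<otimes> s2"
  shows "(inv\<^bsub>Q\<^esub> (\<phi> s1) \<otimes>\<^bsub>Q\<^esub> \<phi> r1) \<otimes>\<^bsub>Q\<^esub> (inv\<^bsub>Q\<^esub> (\<phi> s2) \<otimes>\<^bsub>Q\<^esub> \<phi> r2)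
       = inv\<^bsub>Q\<^esub> (\<phi> (t \<otimes> s1)) \<otimes>\<^bsub>Q\<^esub> \<phi> (a \<otimes> r2)"
proof -
  note D = lrfD[OF L]
  interpret Q: rg Q using D(1) by (simp add: rg_iff)
  have SCc: "S \<subseteq> carrier R" using SC reg_sub_carrier by blast
  have tc: "t \<in> carrier R" using t SCc by blast
  have ts: "t \<otimes> s1 \<in> S" by (rule lo_mult[OF LO t s1])
  have uw: "\<phi> (t \<otimes> s1) \<in> Units Q" by (rule D(3)[OF ts])
  have us1: "\<phi> s1 \<in> Units Q" by (rule D(3)[OF s1])
  have us2: "\<phi> s2 \<in> Units Q" by (rule D(3)[OF s2])
  have pr1: "\<phi> r1 \<in> carrier Q" by (rule ring_hom_closed[OF D(2) r1])
  have pr2: "\<phi> r2 \<in> carrier Q" by (rule ring_hom_closed[OF D(2) r2])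
  have X1: "inv\<^bsub>Q\<^esub> (\<phi> s1) \<otimes>\<^bsub>Q\<^esub> \<phi> r1 \<in> carrier Q" using us1 pr1 by simp
  have X2: "inv\<^bsub>Q\<^esub> (\<phi> s2) \<otimes>\<^bsub>Q\<^esub> \<phi> r2 \<in> carrier Q" using us2 pr2 by simp
  have wc: "\<phi> (t \<otimes> s1) \<in> carrier Q" using uw by blast
  have arc: "a \<otimes> r2 \<in> carrier R" using a r2 by simp
  have ps: "\<phi> (a \<otimes> r2) \<in> carrier Q" by (rule ring_hom_closed[OF D(2) arc])
  have "\<phi> (t \<otimes> s1) \<otimes>\<^bsub>Q\<^esub> ((inv\<^bsub>Q\<^esub> (\<phi> s1) \<otimes>\<^bsub>Q\<^esub> \<phi> r1) \<otimes>\<^bsub>Q\<^esub> (inv\<^bsub>Q\<^esub> (\<phi> s2) \<otimes>\<^bsub>Q\<^esub> \<phi> r2))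
     = (\<phi> (t \<otimes> s1) \<otimes>\<^bsub>Q\<^esub> (inv\<^bsub>Q\<^esub> (\<phi> s1) \<otimes>\<^bsub>Q\<^esub> \<phi> r1)) \<otimes>\<^bsub>Q\<^esub> (inv\<^bsub>Q\<^esub> (\<phi> s2) \<otimes>\<^bsub>Q\<^esub> \<phi> r2)"
    using wc X1 X2 by (simp only: Q.m_assoc)
  also have "\<dots> = \<phi> (t \<otimes> r1) \<otimes>\<^bsub>Q\<^esub> (inv\<^bsub>Q\<^esub> (\<phi> s2) \<otimes>\<^bsub>Q\<^esub> \<phi> r2)"
    by (simp only: frac_cancel[OF L SCc s1 tc r1])
  also have "\<dots> = \<phi> (a \<otimes> s2) \<otimes>\<^bsub>Q\<^esub> (inv\<^bsub>Q\<^esub> (\<phi> s2) \<otimes>\<^bsub>Q\<^esub> \<phi> r2)" by (simp only: e)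
  also have "\<dots> = \<phi> (a \<otimes> r2)" by (rule frac_cancel[OF L SCc s2 a r2])
  finally have "\<phi> (t \<otimes> s1) \<otimes>\<^bsub>Q\<^esub> ((inv\<^bsub>Q\<^esub> (\<phi> s1) \<otimes>\<^bsub>Q\<^esub> \<phi> r1) \<otimes>\<^bsub>Q\<^esub> (inv\<^bsub>Q\<^esub> (\<phi> s2) \<otimes>\<^bsub>Q\<^esub> \<phi> r2))
     = \<phi> (a \<otimes> r2)" .
  then show ?thesis using Q.unit_div[OF uw ps] X1 X2 by simp
qed

end



context rg begin

lemma frac_wd:
  fixes Q :: "'b ring" and Q' :: "'c ring"
  assumes L1: "left_ring_of_fractions R S Q \<phi>" and L2: "left_ring_of_fractions R S Q' \<psi>"
    and SC: "S \<subseteq> regular_elems R" and LO: "left_ore_set R S"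
    and s: "s \<in> S" and s': "s' \<in> S" and r: "r \<in> carrier R" and r': "r' \<in> carrier R"
    and eq: "inv\<^bsub>Q\<^esub> (\<phi> s) \<otimes>\<^bsub>Q\<^esub> \<phi> r = inv\<^bsub>Q\<^esub> (\<phi> s') \<otimes>\<^bsub>Q\<^esub> \<phi> r'"
  shows "inv\<^bsub>Q'\<^esub> (\<psi> s) \<otimes>\<^bsub>Q'\<^esub> \<psi> r = inv\<^bsub>Q'\<^esub> (\<psi> s') \<otimes>\<^bsub>Q'\<^esub> \<psi> r'"
proof -
  have sc: "s \<in> carrier R" using s SC reg_sub_carrier by blast
  obtain t a where t: "t \<in> S" and a: "a \<in> carrier R" and e: "t \<otimes> s = a \<otimes> s'"
    using LO sc s' unfolding left_ore_set_def by blast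
  have "\<exists>u\<in>S. u \<otimes> (t \<otimes> r) = u \<otimes> (a \<otimes> r')"
    using frac_eq_iff[OF L1 SC LO s s' t r r' a e] eq by blast
  then show ?thesis using frac_eq_iff[OF L2 SC LO s s' t r r' a e] by blast
qed

lemma frac_map_eval:
  fixes Q :: "'b ring" and Q' :: "'c ring"
  assumes L1: "left_ring_of_fractions R S Q \<phi>" and L2: "left_ring_of_fractions R S Q' \<psi>"
    and SC: "S \<subseteq> regular_elems R" and LO: "left_ore_set R S"
    and s: "s \<in> S" and r: "r \<in> carrier R"
  shows "frac_map R S \<phi> Q \<psi> Q' (inv\<^bsub>Q\<^esub> (\<phi> s) \<otimes>\<^bsub>Q\<^esub> \<phi> r) = inv\<^bsub>Q'\<^esub> (\<psi> s) \<otimes>\<^bsub>Q'\<^esub> \<psi> r"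
proof -
  define Xq where "Xq = inv\<^bsub>Q\<^esub> (\<phi> s) \<otimes>\<^bsub>Q\<^esub> \<phi> r"
  define P where "P = (\<lambda>q'. \<exists>s'\<in>S. \<exists>r'\<in>carrier R.
      Xq = inv\<^bsub>Q\<^esub> (\<phi> s') \<otimes>\<^bsub>Q\<^esub> \<phi> r' \<and> q' = inv\<^bsub>Q'\<^esub> (\<psi> s') \<otimes>\<^bsub>Q'\<^esub> \<psi> r')"
  have "P (inv\<^bsub>Q'\<^esub> (\<psi> s) \<otimes>\<^bsub>Q'\<^esub> \<psi> r)" unfolding P_def Xq_def using s r by blast
  then have "P (SOME q'. P q')" by (rule someI)
  then obtain s' r' where s': "s' \<in> S" and r': "r' \<in> carrier R"
    and e1: "Xq = inv\<^bsub>Q\<^esub> (\<phi> s') \<otimes>\<^bsub>Q\<^esub> \<phi> r'" and e2: "(SOME q'. P q') = inv\<^bsub>Q'\<^esub> (\<psi> s') \<otimes>\<^bsub>Q'\<^esub> \<psi> r'"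
    unfolding P_def by blast
  have "inv\<^bsub>Q'\<^esub> (\<psi> s) \<otimes>\<^bsub>Q'\<^esub> \<psi> r = inv\<^bsub>Q'\<^esub> (\<psi> s') \<otimes>\<^bsub>Q'\<^esub> \<psi> r'"
    by (rule frac_wd[OF L1 L2 SC LO s s' r r']) (use e1 Xq_def in simp)
  moreover have "frac_map R S \<phi> Q \<psi> Q' Xq = (SOME q'. P q')"
    unfolding frac_map_def P_def by simp
  ultimately show ?thesis using e2 Xq_def by simp
qed

lemma frac_iso:
  fixes Q :: "'b ring" and Q' :: "'c ring"
  assumes L1: "left_ring_of_fractions R S Q \<phi>" and L2: "left_ring_of_fractions R S Q' \<psi>"
    and SC: "S \<subseteq> regular_elems R" and LO: "left_ore_set R S"
  shows "Q \<simeq> Q'"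
proof -
  note D1 = lrfD[OF L1] and D2 = lrfD[OF L2]
  interpret Q: rg Q using D1(1) by (simp add: rg_iff)
  interpret Q': rg Q' using D2(1) by (simp add: rg_iff)
  have SCc: "S \<subseteq> carrier R" using SC reg_sub_carrier by blast
  define h where "h = frac_map R S \<phi> Q \<psi> Q'"
  define h' where "h' = frac_map R S \<psi> Q' \<phi> Q"
  have ev: "h (inv\<^bsub>Q\<^esub> (\<phi> s) \<otimes>\<^bsub>Q\<^esub> \<phi> r) = inv\<^bsub>Q'\<^esub> (\<psi> s) \<otimes>\<^bsub>Q'\<^esub> \<psi> r"
    if "s \<in> S" "r \<in> carrier R" for s r
    unfolding h_def by (rule frac_map_eval[OF L1 L2 SC LO that])
  have ev': "h' (inv\<^bsub>Q'\<^esub> (\<psi> s) \<otimes>\<^bsub>Q'\<^esub> \<psi> r) = inv\<^bsub>Q\<^esub> (\<phi> s) \<otimes>\<^bsub>Q\<^esub> \<phi> r"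
    if "s \<in> S" "r \<in> carrier R" for s r
    unfolding h'_def by (rule frac_map_eval[OF L2 L1 SC LO that])
  have cQ: "inv\<^bsub>Q\<^esub> (\<phi> s) \<otimes>\<^bsub>Q\<^esub> \<phi> r \<in> carrier Q" if "s \<in> S" "r \<in> carrier R" for s r
  proof -
    have "\<phi> s \<in> Units Q" by (rule D1(3)[OF that(1)])
    moreover have "\<phi> r \<in> carrier Q" by (rule ring_hom_closed[OF D1(2) that(2)])
    ultimately show ?thesis by simp
  qed
  have cQ': "inv\<^bsub>Q'\<^esub> (\<psi> s) \<otimes>\<^bsub>Q'\<^esub> \<psi> r \<in> carrier Q'" if "s \<in> S" "r \<in> carrier R" for s r
  proof -
    have "\<psi> s \<in> Units Q'" by (rule D2(3)[OF that(1)])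
    moreover have "\<psi> r \<in> carrier Q'" by (rule ring_hom_closed[OF D2(2) that(2)])
    ultimately show ?thesis by simp
  qed
  have hc: "h q \<in> carrier Q'" if q: "q \<in> carrier Q" for q
  proof -
    obtain s r where "s \<in> S" "r \<in> carrier R" "q = inv\<^bsub>Q\<^esub> (\<phi> s) \<otimes>\<^bsub>Q\<^esub> \<phi> r" using D1(4)[OF q] by blast
    then show ?thesis using ev cQ' by simp
  qed
  have h'c: "h' q \<in> carrier Q" if q: "q \<in> carrier Q'" for q
  proof -
    obtain s r where "s \<in> S" "r \<in> carrier R" "q = inv\<^bsub>Q'\<^esub> (\<psi> s) \<otimes>\<^bsub>Q'\<^esub> \<psi> r" using D2(4)[OF q] by blast
    then show ?thesis using ev' cQ by simp
  qed
  have inv1: "h' (h q) = q" if q: "q \<in> carrier Q" for q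
  proof -
    obtain s r where "s \<in> S" "r \<in> carrier R" "q = inv\<^bsub>Q\<^esub> (\<phi> s) \<otimes>\<^bsub>Q\<^esub> \<phi> r" using D1(4)[OF q] by blast
    then show ?thesis using ev ev' by simp
  qed
  have inv2: "h (h' q) = q" if q: "q \<in> carrier Q'" for q
  proof -
    obtain s r where "s \<in> S" "r \<in> carrier R" "q = inv\<^bsub>Q'\<^esub> (\<psi> s) \<otimes>\<^bsub>Q'\<^esub> \<psi> r" using D2(4)[OF q] by blast
    then show ?thesis using ev ev' by simp
  qed
  have bij: "bij_betw h (carrier Q) (carrier Q')"
    by (rule bij_betw_byWitness[where f'=h']) (use inv1 inv2 hc h'c in auto)
  have hmul: "h (x \<otimes>\<^bsub>Q\<^esub> y) = h x \<otimes>\<^bsub>Q'\<^esub> h y" if x: "x \<in> carrier Q" and y: "y \<in> carrier Q" for x y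
  proof -
    obtain s1 r1 where s1: "s1 \<in> S" and r1: "r1 \<in> carrier R" and xe: "x = inv\<^bsub>Q\<^esub> (\<phi> s1) \<otimes>\<^bsub>Q\<^esub> \<phi> r1"
      using D1(4)[OF x] by blast
    obtain s2 r2 where s2: "s2 \<in> S" and r2: "r2 \<in> carrier R" and ye: "y = inv\<^bsub>Q\<^esub> (\<phi> s2) \<otimes>\<^bsub>Q\<^esub> \<phi> r2"
      using D1(4)[OF y] by blast
    obtain t a where t: "t \<in> S" and a: "a \<in> carrier R" and e: "t \<otimes> r1 = a \<otimes> s2"
      using LO r1 s2 unfolding left_ore_set_def by blast
    have ts: "t \<otimes> s1 \<in> S" by (rule lo_mult[OF LO t s1])
    have ar: "a \<otimes> r2 \<in> carrier R" using a r2 by simp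
    have "h (x \<otimes>\<^bsub>Q\<^esub> y) = h (inv\<^bsub>Q\<^esub> (\<phi> (t \<otimes> s1)) \<otimes>\<^bsub>Q\<^esub> \<phi> (a \<otimes> r2))"
      unfolding xe ye by (simp only: frac_mult[OF L1 SC LO s1 s2 t r1 r2 a e])
    also have "\<dots> = inv\<^bsub>Q'\<^esub> (\<psi> (t \<otimes> s1)) \<otimes>\<^bsub>Q'\<^esub> \<psi> (a \<otimes> r2)" by (rule ev[OF ts ar])
    also have "\<dots> = (inv\<^bsub>Q'\<^esub> (\<psi> s1) \<otimes>\<^bsub>Q'\<^esub> \<psi> r1) \<otimes>\<^bsub>Q'\<^esub> (inv\<^bsub>Q'\<^esub> (\<psi> s2) \<otimes>\<^bsub>Q'\<^esub> \<psi> r2)"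
      by (rule frac_mult[OF L2 SC LO s1 s2 t r1 r2 a e, symmetric])
    also have "\<dots> = h x \<otimes>\<^bsub>Q'\<^esub> h y" unfolding xe ye using ev s1 r1 s2 r2 by simp
    finally show ?thesis .
  qed
  have hadd: "h (x \<oplus>\<^bsub>Q\<^esub> y) = h x \<oplus>\<^bsub>Q'\<^esub> h y" if x: "x \<in> carrier Q" and y: "y \<in> carrier Q" for x y
  proof -
    obtain s1 r1 where s1: "s1 \<in> S" and r1: "r1 \<in> carrier R" and xe: "x = inv\<^bsub>Q\<^esub> (\<phi> s1) \<otimes>\<^bsub>Q\<^esub> \<phi> r1"
      using D1(4)[OF x] by blast
    obtain s2 r2 where s2: "s2 \<in> S" and r2: "r2 \<in> carrier R" and ye: "y = inv\<^bsub>Q\<^esub> (\<phi> s2) \<otimes>\<^bsub>Q\<^esub> \<phi> r2"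
      using D1(4)[OF y] by blast
    have s1c: "s1 \<in> carrier R" using s1 SCc by blast
    obtain t a where t: "t \<in> S" and a: "a \<in> carrier R" and e: "t \<otimes> s1 = a \<otimes> s2"
      using LO s1c s2 unfolding left_ore_set_def by blast
    have tc: "t \<in> carrier R" using t SCc by blast
    have ts: "t \<otimes> s1 \<in> S" by (rule lo_mult[OF LO t s1])
    have ar: "t \<otimes> r1 \<oplus> a \<otimes> r2 \<in> carrier R" using a r2 tc r1 by simp
    have "h (x \<oplus>\<^bsub>Q\<^esub> y) = h (inv\<^bsub>Q\<^esub> (\<phi> (t \<otimes> s1)) \<otimes>\<^bsub>Q\<^esub> \<phi> (t \<otimes> r1 \<oplus> a \<otimes> r2))"
      unfolding xe ye by (simp only: frac_add[OF L1 SC LO s1 s2 t r1 r2 a e])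
    also have "\<dots> = inv\<^bsub>Q'\<^esub> (\<psi> (t \<otimes> s1)) \<otimes>\<^bsub>Q'\<^esub> \<psi> (t \<otimes> r1 \<oplus> a \<otimes> r2)" by (rule ev[OF ts ar])
    also have "\<dots> = (inv\<^bsub>Q'\<^esub> (\<psi> s1) \<otimes>\<^bsub>Q'\<^esub> \<psi> r1) \<oplus>\<^bsub>Q'\<^esub> (inv\<^bsub>Q'\<^esub> (\<psi> s2) \<otimes>\<^bsub>Q'\<^esub> \<psi> r2)"
      by (rule frac_add[OF L2 SC LO s1 s2 t r1 r2 a e, symmetric])
    also have "\<dots> = h x \<oplus>\<^bsub>Q'\<^esub> h y" unfolding xe ye using ev s1 r1 s2 r2 by simp
    finally show ?thesis .
  qed
  have hone: "h \<one>\<^bsub>Q\<^esub> = \<one>\<^bsub>Q'\<^esub>"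
  proof -
    have one: "\<one> \<in> S" by (rule one_in_S_left[OF LO])
    have "\<one>\<^bsub>Q\<^esub> = inv\<^bsub>Q\<^esub> (\<phi> \<one>) \<otimes>\<^bsub>Q\<^esub> \<phi> \<one>" using ring_hom_one[OF D1(2)] by simp
    moreover have "\<one>\<^bsub>Q'\<^esub> = inv\<^bsub>Q'\<^esub> (\<psi> \<one>) \<otimes>\<^bsub>Q'\<^esub> \<psi> \<one>" using ring_hom_one[OF D2(2)] by simp
    ultimately show ?thesis using ev[OF one one_closed] by simp
  qed
  have "h \<in> ring_hom Q Q'"
    by (rule ring_hom_memI) (use hc hmul hadd hone in auto)
  then have "h \<in> ring_iso Q Q'" using bij unfolding ring_iso_def by blast
  then show ?thesis unfolding is_ring_iso_def by blast
qed

end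



context rg begin

lemma C_ores_from_P1:
  fixes Q :: "'b ring"
  assumes nz: "\<one> \<noteq> \<zero>" and L: "left_ring_of_fractions R (S_0 R) Q \<phi>" and ss: "semisimple_ring Q"
  shows "left_ore_set R (regular_elems R) \<and> right_ore_set R (regular_elems R)"
proof -
  note P = S_0_props[OF nz]
  have SC: "S_0 R \<subseteq> regular_elems R" using P by blast
  have ro: "right_ore_set R (S_0 R)" using P unfolding right_den_set_def by blast
  have U: "\<phi> c \<in> Units Q" if "c \<in> regular_elems R" for c
    by (rule lrf_units[OF L SC ss that])
  have "left_ore_set R (regular_elems R)" by (rule lrf_left_ore_C[OF L SC U nz])
  moreover have "right_ore_set R (regular_elems R)"
    by (rule rrf_right_ore_C[OF lrf_to_rrf[OF L SC ro] SC U nz])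
  ultimately show ?thesis by blast
qed

lemma S_eqs:
  assumes nz: "\<one> \<noteq> \<zero>" and lo: "left_ore_set R (regular_elems R)" and ro: "right_ore_set R (regular_elems R)"
  shows "S_0 R = regular_elems R \<and> S_l0 R = regular_elems R \<and> S_r0 R = regular_elems R"
proof -
  have ld: "left_den_set R (regular_elems R)" using left_den_iff[of "regular_elems R"] lo by blast
  have rd: "right_den_set R (regular_elems R)" using right_den_iff[of "regular_elems R"] ro by blast
  have CC: "regular_elems R \<subseteq> regular_elems R" by simp
  have a1: "S_0 R \<subseteq> regular_elems R" and m1: "regular_elems R \<subseteq> S_0 R"
    using S_0_props[OF nz] ld rd CC by auto
  have a2: "S_l0 R \<subseteq> regular_elems R" and m2: "regular_elems R \<subseteq> S_l0 R"
    using S_l0_props[OF nz] ld CC by auto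
  have a3: "S_r0 R \<subseteq> regular_elems R" and m3: "regular_elems R \<subseteq> S_r0 R"
    using S_r0_props[OF nz] rd CC by auto
  show ?thesis using a1 m1 a2 m2 a3 m3 by (intro conjI equalityI)
qed

end

theorem theorem4p5:
  fixes R :: "'a ring"
  assumes "ring R" and "\<one>\<^bsub>R\<^esub> \<noteq> \<zero>\<^bsub>R\<^esub>"
  defines "C \<equiv> regular_elems R"
  shows
    "((\<exists>(Q :: 'a frac_ring) \<phi>. left_ring_of_fractions R (S_0 R) Q \<phi> \<and> semisimple_ring Q)
       \<longleftrightarrow>
      (left_ore_set R C \<and> right_ore_set R C \<and>
       (\<exists>(Q :: 'a frac_ring) \<phi>. left_ring_of_fractions R C Q \<phi> \<and> semisimple_ring Q) \<and>
       (\<exists>(Q :: 'a frac_ring) \<phi>. right_ring_of_fractions R C Q \<phi> \<and> semisimple_ring Q)))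
     \<and>
     ((\<exists>(Q :: 'a frac_ring) \<phi>. left_ring_of_fractions R (S_0 R) Q \<phi> \<and> semisimple_ring Q)
       \<longleftrightarrow>
      ((\<exists>(Q :: 'a frac_ring) \<phi>. left_ring_of_fractions R (S_l0 R) Q \<phi> \<and> semisimple_ring Q) \<and>
       (\<exists>(Q :: 'a frac_ring) \<phi>. right_ring_of_fractions R (S_r0 R) Q \<phi> \<and> semisimple_ring Q)))
     \<and>
     ((\<exists>(Q :: 'a frac_ring) \<phi>. left_ring_of_fractions R (S_0 R) Q \<phi> \<and> semisimple_ring Q) \<longrightarrow>
       S_0 R = C \<and>
       (\<forall>(Q0 :: 'a frac_ring) \<phi>0 (Q1 :: 'a frac_ring) \<phi>1 (Q2 :: 'a frac_ring) \<phi>2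
          (Q3 :: 'a frac_ring) \<phi>3 (Q4 :: 'a frac_ring) \<phi>4.
          left_ring_of_fractions R (S_0 R) Q0 \<phi>0 \<and>
          left_ring_of_fractions R C Q1 \<phi>1 \<and>
          right_ring_of_fractions R C Q2 \<phi>2 \<and>
          left_ring_of_fractions R (S_l0 R) Q3 \<phi>3 \<and>
          right_ring_of_fractions R (S_r0 R) Q4 \<phi>4 \<longrightarrow>
          Q0 \<simeq> Q1 \<and> Q1 \<simeq> Q2 \<and> Q2 \<simeq> Q3 \<and> Q3 \<simeq> Q4))"
proof -
  interpret rg R using assms(1) by (simp add: rg_iff)
  have nz: "\<one>\<^bsub>R\<^esub> \<noteq> \<zero>\<^bsub>R\<^esub>" by (rule assms(2))
  have CC: "C \<subseteq> regular_elems R" unfolding C_def by simp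
  define P1 where "P1 = (\<exists>(Q :: 'a frac_ring) \<phi>. left_ring_of_fractions R (S_0 R) Q \<phi> \<and> semisimple_ring Q)"
  have K1: "left_ore_set R C \<and> right_ore_set R C \<and> S_0 R = C \<and> S_l0 R = C \<and> S_r0 R = C" if P1
  proof -
    from \<open>P1\<close> obtain Q :: "'a frac_ring" and \<phi> where L: "left_ring_of_fractions R (S_0 R) Q \<phi>"
      and ss: "semisimple_ring Q" unfolding P1_def by blast
    have o: "left_ore_set R C \<and> right_ore_set R C" unfolding C_def by (rule C_ores_from_P1[OF nz L ss])
    then show ?thesis using S_eqs[OF nz] unfolding C_def by blast
  qed
  have K2: "S_0 R = C \<and> S_l0 R = C \<and> S_r0 R = C" if "left_ore_set R C" "right_ore_set R C"
    using S_eqs[OF nz] that unfolding C_def by blast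
  have part1: "P1 \<longleftrightarrow> (left_ore_set R C \<and> right_ore_set R C \<and>
       (\<exists>(Q :: 'a frac_ring) \<phi>. left_ring_of_fractions R C Q \<phi> \<and> semisimple_ring Q) \<and>
       (\<exists>(Q :: 'a frac_ring) \<phi>. right_ring_of_fractions R C Q \<phi> \<and> semisimple_ring Q))"
  proof
    assume h: P1
    note k = K1[OF h]
    from h obtain Q :: "'a frac_ring" and \<phi> where L: "left_ring_of_fractions R (S_0 R) Q \<phi>"
      and ss: "semisimple_ring Q" unfolding P1_def by blast
    have L': "left_ring_of_fractions R C Q \<phi>" using L k by simp
    have R': "right_ring_of_fractions R C Q \<phi>" using lrf_to_rrf[OF L' CC] k by blast
    show "left_ore_set R C \<and> right_ore_set R C \<and>
       (\<exists>(Q :: 'a frac_ring) \<phi>. left_ring_of_fractions R C Q \<phi> \<and> semisimple_ring Q) \<and>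
       (\<exists>(Q :: 'a frac_ring) \<phi>. right_ring_of_fractions R C Q \<phi> \<and> semisimple_ring Q)"
      using k L' R' ss by blast
  next
    assume h: "left_ore_set R C \<and> right_ore_set R C \<and>
       (\<exists>(Q :: 'a frac_ring) \<phi>. left_ring_of_fractions R C Q \<phi> \<and> semisimple_ring Q) \<and>
       (\<exists>(Q :: 'a frac_ring) \<phi>. right_ring_of_fractions R C Q \<phi> \<and> semisimple_ring Q)"
    then have "S_0 R = C" using K2 by blast
    then show P1 using h unfolding P1_def by simp
  qed
  have part2: "P1 \<longleftrightarrow> ((\<exists>(Q :: 'a frac_ring) \<phi>. left_ring_of_fractions R (S_l0 R) Q \<phi> \<and> semisimple_ring Q) \<and>
       (\<exists>(Q :: 'a frac_ring) \<phi>. right_ring_of_fractions R (S_r0 R) Q \<phi> \<and> semisimple_ring Q))"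
  proof
    assume h: P1
    note k = K1[OF h]
    from h obtain Q :: "'a frac_ring" and \<phi> where L: "left_ring_of_fractions R (S_0 R) Q \<phi>"
      and ss: "semisimple_ring Q" unfolding P1_def by blast
    have L': "left_ring_of_fractions R C Q \<phi>" using L k by simp
    have R': "right_ring_of_fractions R C Q \<phi>" using lrf_to_rrf[OF L' CC] k by blast
    show "(\<exists>(Q :: 'a frac_ring) \<phi>. left_ring_of_fractions R (S_l0 R) Q \<phi> \<and> semisimple_ring Q) \<and>
       (\<exists>(Q :: 'a frac_ring) \<phi>. right_ring_of_fractions R (S_r0 R) Q \<phi> \<and> semisimple_ring Q)"
      using k L' R' ss by auto
  next
    assume h: "(\<exists>(Q :: 'a frac_ring) \<phi>. left_ring_of_fractions R (S_l0 R) Q \<phi> \<and> semisimple_ring Q) \<and>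
       (\<exists>(Q :: 'a frac_ring) \<phi>. right_ring_of_fractions R (S_r0 R) Q \<phi> \<and> semisimple_ring Q)"
    then obtain Q :: "'a frac_ring" and \<phi> and Q' :: "'a frac_ring" and \<psi>
      where L: "left_ring_of_fractions R (S_l0 R) Q \<phi>" and ss: "semisimple_ring Q"
        and Rr: "right_ring_of_fractions R (S_r0 R) Q' \<psi>" and ss': "semisimple_ring Q'" by blast
    have SCl: "S_l0 R \<subseteq> regular_elems R" using S_l0_props[OF nz] by blast
    have SCr: "S_r0 R \<subseteq> regular_elems R" using S_r0_props[OF nz] by blast
    have U1: "\<phi> c \<in> Units Q" if "c \<in> regular_elems R" for c by (rule lrf_units[OF L SCl ss that])
    have U2: "\<psi> c \<in> Units Q'" if "c \<in> regular_elems R" for c by (rule rrf_units[OF Rr SCr ss' that])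
    have lo: "left_ore_set R C" unfolding C_def by (rule lrf_left_ore_C[OF L SCl U1 nz])
    have ro: "right_ore_set R C" unfolding C_def by (rule rrf_right_ore_C[OF Rr SCr U2 nz])
    note k = K2[OF lo ro]
    have "left_ring_of_fractions R (S_0 R) Q \<phi>" using L k by simp
    then show P1 using ss unfolding P1_def by blast
  qed
  have isos: "Q0 \<simeq> Q1 \<and> Q1 \<simeq> Q2 \<and> Q2 \<simeq> Q3 \<and> Q3 \<simeq> Q4"
    if h: P1 and hh: "left_ring_of_fractions R (S_0 R) Q0 \<phi>0 \<and>
          left_ring_of_fractions R C Q1 \<phi>1 \<and>
          right_ring_of_fractions R C Q2 \<phi>2 \<and>
          left_ring_of_fractions R (S_l0 R) Q3 \<phi>3 \<and>
          right_ring_of_fractions R (S_r0 R) Q4 \<phi>4"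
    for Q0 :: "'a frac_ring" and \<phi>0 and Q1 :: "'a frac_ring" and \<phi>1 and Q2 :: "'a frac_ring" and \<phi>2
      and Q3 :: "'a frac_ring" and \<phi>3 and Q4 :: "'a frac_ring" and \<phi>4
  proof -
    note k = K1[OF h]
    have lo: "left_ore_set R C" using k by blast
    have L0: "left_ring_of_fractions R C Q0 \<phi>0" using hh k by simp
    have L1: "left_ring_of_fractions R C Q1 \<phi>1" using hh by simp
    have L2: "left_ring_of_fractions R C Q2 \<phi>2" using rrf_to_lrf[OF _ CC lo, of Q2 \<phi>2] hh by simp
    have L3: "left_ring_of_fractions R C Q3 \<phi>3" using hh k by simp
    have L4: "left_ring_of_fractions R C Q4 \<phi>4" using rrf_to_lrf[OF _ CC lo, of Q4 \<phi>4] hh k by simp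
    show ?thesis
      using frac_iso[OF L0 L1 CC lo] frac_iso[OF L1 L2 CC lo] frac_iso[OF L2 L3 CC lo]
        frac_iso[OF L3 L4 CC lo] by blast
  qed
  have part3: "P1 \<longrightarrow> S_0 R = C \<and>
       (\<forall>(Q0 :: 'a frac_ring) \<phi>0 (Q1 :: 'a frac_ring) \<phi>1 (Q2 :: 'a frac_ring) \<phi>2
          (Q3 :: 'a frac_ring) \<phi>3 (Q4 :: 'a frac_ring) \<phi>4.
          left_ring_of_fractions R (S_0 R) Q0 \<phi>0 \<and>
          left_ring_of_fractions R C Q1 \<phi>1 \<and>
          right_ring_of_fractions R C Q2 \<phi>2 \<and>
          left_ring_of_fractions R (S_l0 R) Q3 \<phi>3 \<and>
          right_ring_of_fractions R (S_r0 R) Q4 \<phi>4 \<longrightarrow>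
          Q0 \<simeq> Q1 \<and> Q1 \<simeq> Q2 \<and> Q2 \<simeq> Q3 \<and> Q3 \<simeq> Q4)"
    using K1 isos by blast
  show ?thesis unfolding P1_def[symmetric] using part1 part2 part3 by (intro conjI)
qed



end
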